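(* Let $T$ be a spherically homogeneous rooted tree in which every vertex has at least $2$ children, and let $G\le\mathrm{Aut}~T$ be a finitely generated branch group which contains a non-trivial element of finite order. Then $G$ does not have property $\mathrm{(LR)}$.
   Context: $\mathrm{Aut}~T$ is the group of automorphisms of $T$ fixing the root; $\mathcal{L}_n$ is the $n$th level; $T_v$ is the subtree of descendants of $v$. For $G\le\mathrm{Aut}~T$, $\mathrm{rist}_G(v)$ is the subgroup of elements of $G$ fixing every vertex outside $T_v$, and $\mathrm{Rist}_G(n)=\prod_{v\in\mathcal{L}_n}\mathrm{rist}_G(v)$. $G$ is level-transitive if it is transitive on each level; $G$ is branch if it is level-transitive and each $\mathrm{Rist}_G(n)$ has finite index in $G$. $H\le G$ is a virtual retract of $G$ if there is a finite-index $K\le G$ containing $H$ and a homomorphism $K\to H$ that is the identity on $H$; $G$ has $\mathrm{(LR)}$ if every finitely generated subgroup is a virtual retract of $G$. *)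

theory Defs
  imports "HOL-Algebra.Algebra"
begin

text \<open>A spherically homogeneous rooted tree with branching sequence m: vertices at level n
  are the words v of length n with v!i < m i; the root is the empty word.\<close>

definition tree :: "(nat \<Rightarrow> nat) \<Rightarrow> nat list set" where
  "tree m = {v. \<forall>i<length v. v ! i < m i}"

definition level :: "(nat \<Rightarrow> nat) \<Rightarrow> nat \<Rightarrow> nat list set" where
  "level m n = {v \<in> tree m. length v = n}"

definition desc :: "nat list \<Rightarrow> nat list \<Rightarrow> bool" where
  "desc v w \<longleftrightarrow> take (length v) w = v"

text \<open>Tree automorphisms (automatically fixing the root), normalized to be the identity
  outside the tree.\<close>
definition is_aut :: "(nat \<Rightarrow> nat) \<Rightarrow> (nat list \<Rightarrow> nat list) \<Rightarrow> bool" where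
  "is_aut m g \<longleftrightarrow> bij_betw g (tree m) (tree m)
     \<and> (\<forall>v\<in>tree m. length (g v) = length v \<and> (\<forall>k. g (take k v) = take k (g v)))
     \<and> (\<forall>v. v \<notin> tree m \<longrightarrow> g v = v)"

definition AutT :: "(nat \<Rightarrow> nat) \<Rightarrow> (nat list \<Rightarrow> nat list) monoid" where
  "AutT m = \<lparr>carrier = {g. is_aut m g}, monoid.mult = (\<circ>), one = id\<rparr>"

definition grp :: "(nat \<Rightarrow> nat) \<Rightarrow> (nat list \<Rightarrow> nat list) set \<Rightarrow> (nat list \<Rightarrow> nat list) monoid" where
  "grp m G = (AutT m)\<lparr>carrier := G\<rparr>"

definition rist :: "(nat \<Rightarrow> nat) \<Rightarrow> (nat list \<Rightarrow> nat list) set \<Rightarrow> nat list \<Rightarrow> (nat list \<Rightarrow> nat list) set" where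
  "rist m G v = {g \<in> G. \<forall>w \<in> tree m. \<not> desc v w \<longrightarrow> g w = w}"

text \<open>Rist_G(n): the product of the (pairwise commuting) rigid stabilisers of level n,
  i.e. the subgroup they generate.\<close>
definition Rist :: "(nat \<Rightarrow> nat) \<Rightarrow> (nat list \<Rightarrow> nat list) set \<Rightarrow> nat \<Rightarrow> (nat list \<Rightarrow> nat list) set" where
  "Rist m G n = generate (AutT m) (\<Union>v \<in> level m n. rist m G v)"

definition finite_index :: "(nat \<Rightarrow> nat) \<Rightarrow> (nat list \<Rightarrow> nat list) set \<Rightarrow> (nat list \<Rightarrow> nat list) set \<Rightarrow> bool" where
  "finite_index m G K \<longleftrightarrow> finite (rcosets\<^bsub>grp m G\<^esub> K)"

definition level_transitive :: "(nat \<Rightarrow> nat) \<Rightarrow> (nat list \<Rightarrow> nat list) set \<Rightarrow> bool" where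
  "level_transitive m G \<longleftrightarrow> (\<forall>n. \<forall>v \<in> level m n. \<forall>w \<in> level m n. \<exists>g \<in> G. g v = w)"

definition branch :: "(nat \<Rightarrow> nat) \<Rightarrow> (nat list \<Rightarrow> nat list) set \<Rightarrow> bool" where
  "branch m G \<longleftrightarrow> level_transitive m G \<and> (\<forall>n. finite_index m G (Rist m G n))"

definition fin_gen :: "(nat \<Rightarrow> nat) \<Rightarrow> (nat list \<Rightarrow> nat list) set \<Rightarrow> bool" where
  "fin_gen m H \<longleftrightarrow> (\<exists>S. finite S \<and> S \<subseteq> H \<and> generate (AutT m) S = H)"

definition virtual_retract :: "(nat \<Rightarrow> nat) \<Rightarrow> (nat list \<Rightarrow> nat list) set \<Rightarrow> (nat list \<Rightarrow> nat list) set \<Rightarrow> bool" where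
  "virtual_retract m G H \<longleftrightarrow> (\<exists>K. subgroup K (grp m G) \<and> H \<subseteq> K \<and> finite_index m G K \<and>
     (\<exists>r. r \<in> hom (grp m K) (grp m H) \<and> (\<forall>h\<in>H. r h = h)))"

definition LR :: "(nat \<Rightarrow> nat) \<Rightarrow> (nat list \<Rightarrow> nat list) set \<Rightarrow> bool" where
  "LR m G \<longleftrightarrow> (\<forall>H. subgroup H (grp m G) \<and> fin_gen m H \<longrightarrow> virtual_retract m G H)"

end

theory Submission
  imports Defs
begin

lemma tree_take: "v \<in> tree m \<Longrightarrow> take k v \<in> tree m"
  by (auto simp: tree_def)

lemma aut_tree: "is_aut m g \<Longrightarrow> v \<in> tree m \<Longrightarrow> g v \<in> tree m"
  unfolding is_aut_def bij_betw_def by auto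

lemma aut_len: "is_aut m g \<Longrightarrow> v \<in> tree m \<Longrightarrow> length (g v) = length v"
  unfolding is_aut_def by auto

lemma aut_take: "is_aut m g \<Longrightarrow> v \<in> tree m \<Longrightarrow> g (take k v) = take k (g v)"
  unfolding is_aut_def by auto

lemma aut_out: "is_aut m g \<Longrightarrow> v \<notin> tree m \<Longrightarrow> g v = v"
  unfolding is_aut_def by auto

lemma aut_inj: "is_aut m g \<Longrightarrow> inj g"
proof (rule injI)
  fix x y assume a: "is_aut m g" and e: "g x = g y"
  have ij: "inj_on g (tree m)" using a unfolding is_aut_def bij_betw_def by auto
  show "x = y"
  proof (cases "x \<in> tree m"; cases "y \<in> tree m")
    assume "x \<in> tree m" "y \<in> tree m" thus ?thesis using ij e by (auto dest: inj_onD)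
  next
    assume "x \<in> tree m" "y \<notin> tree m" thus ?thesis using e aut_out[OF a] aut_tree[OF a] by metis
  next
    assume "x \<notin> tree m" "y \<in> tree m" thus ?thesis using e aut_out[OF a] aut_tree[OF a] by metis
  next
    assume "x \<notin> tree m" "y \<notin> tree m" thus ?thesis using e aut_out[OF a] by metis
  qed
qed

lemma aut_comp: assumes f: "is_aut m f" and g: "is_aut m g" shows "is_aut m (f \<circ> g)"
  unfolding is_aut_def
proof (intro conjI ballI allI impI)
  show "bij_betw (f \<circ> g) (tree m) (tree m)"
    using f g unfolding is_aut_def by (auto intro: bij_betw_trans)
  fix v assume v: "v \<in> tree m"
  show "length ((f \<circ> g) v) = length v" using aut_len[OF f aut_tree[OF g v]] aut_len[OF g v] by simp
  fix k show "(f \<circ> g) (take k v) = take k ((f \<circ> g) v)"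
    using aut_take[OF f aut_tree[OF g v]] aut_take[OF g v] by simp
next
  fix v assume "v \<notin> tree m" thus "(f \<circ> g) v = v" using aut_out[OF f] aut_out[OF g] by simp
qed

lemma aut_id: "is_aut m id"
  unfolding is_aut_def by auto

definition ainv :: "(nat \<Rightarrow> nat) \<Rightarrow> (nat list \<Rightarrow> nat list) \<Rightarrow> (nat list \<Rightarrow> nat list)" where
  "ainv m g = (\<lambda>w. if w \<in> tree m then inv_into (tree m) g w else w)"

lemma ainv_props:
  assumes a: "is_aut m g"
  shows "is_aut m (ainv m g)" "ainv m g \<circ> g = id" "g \<circ> ainv m g = id"
proof -
  have b: "bij_betw g (tree m) (tree m)" using a unfolding is_aut_def by auto
  have bi: "bij_betw (inv_into (tree m) g) (tree m) (tree m)" using bij_betw_inv_into[OF b] .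
  have bi2: "bij_betw (ainv m g) (tree m) (tree m)"
    using bi by (rule bij_betw_cong[THEN iffD1, rotated]) (simp add: ainv_def)
  have l: "\<And>w. w \<in> tree m \<Longrightarrow> ainv m g (g w) = w"
  proof -
    fix w assume w: "w \<in> tree m"
    have "inj_on g (tree m)" using b by (simp add: bij_betw_def)
    thus "ainv m g (g w) = w" using w aut_tree[OF a w] by (simp add: ainv_def inv_into_f_f)
  qed
  have r: "\<And>w. w \<in> tree m \<Longrightarrow> g (ainv m g w) = w"
    using b by (simp add: ainv_def bij_betw_def f_inv_into_f)
  have it: "\<And>w. w \<in> tree m \<Longrightarrow> ainv m g w \<in> tree m"
    using bi2 unfolding bij_betw_def by auto
  show c1: "ainv m g \<circ> g = id"
  proof
    fix w show "(ainv m g \<circ> g) w = id w"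
      by (cases "w \<in> tree m") (use l aut_out[OF a] in \<open>auto simp: ainv_def\<close>)
  qed
  show c2: "g \<circ> ainv m g = id"
  proof
    fix w show "(g \<circ> ainv m g) w = id w"
      by (cases "w \<in> tree m") (use r aut_out[OF a] in \<open>auto simp: ainv_def\<close>)
  qed
  show "is_aut m (ainv m g)"
    unfolding is_aut_def
  proof (intro conjI ballI allI impI bi2)
    fix v assume v: "v \<in> tree m"
    show "length (ainv m g v) = length v"
      using aut_len[OF a it[OF v]] r[OF v] by simp
    fix k
    have "g (take k (ainv m g v)) = take k v"
      using aut_take[OF a it[OF v], of k] r[OF v] by simp
    hence "ainv m g (g (take k (ainv m g v))) = ainv m g (take k v)" by simp
    thus "ainv m g (take k v) = take k (ainv m g v)"
      using l[OF tree_take[OF it[OF v]]] by simp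
  next
    fix v assume "v \<notin> tree m" thus "ainv m g v = v" by (simp add: ainv_def)
  qed
qed

lemma AutT_carrier[simp]: "carrier (AutT m) = {g. is_aut m g}"
  and AutT_mult[simp]: "x \<otimes>\<^bsub>AutT m\<^esub> y = x \<circ> y"
  and AutT_one[simp]: "\<one>\<^bsub>AutT m\<^esub> = id"
  by (simp_all add: AutT_def)

lemma AutT_group: "group (AutT m)"
proof (rule groupI)
  fix x assume "x \<in> carrier (AutT m)"
  thus "\<exists>y\<in>carrier (AutT m). y \<otimes>\<^bsub>AutT m\<^esub> x = \<one>\<^bsub>AutT m\<^esub>"
    using ainv_props[of m x] by auto
qed (auto simp: aut_comp aut_id o_assoc)

lemma AutT_inv: "is_aut m g \<Longrightarrow> inv\<^bsub>AutT m\<^esub> g = ainv m g"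
proof -
  assume a: "is_aut m g"
  show ?thesis
    by (rule group.inv_equality[OF AutT_group]) (use a ainv_props[OF a] in auto)
qed

lemma AutT_inv_l: "is_aut m g \<Longrightarrow> (inv\<^bsub>AutT m\<^esub> g) (g w) = w"
  using AutT_inv ainv_props(2) by (metis comp_apply id_apply)

lemma AutT_inv_r: "is_aut m g \<Longrightarrow> g ((inv\<^bsub>AutT m\<^esub> g) w) = w"
  using AutT_inv ainv_props(3) by (metis comp_apply id_apply)

lemma AutT_inv_aut: "is_aut m g \<Longrightarrow> is_aut m (inv\<^bsub>AutT m\<^esub> g)"
  using AutT_inv ainv_props(1) by metis

lemma AutT_pow_aut: "is_aut m g \<Longrightarrow> is_aut m (g [^]\<^bsub>AutT m\<^esub> (n::nat))"
  using monoid.nat_pow_closed[OF group.is_monoid[OF AutT_group], of g m n] by simp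

lemma desc_len: "desc v w \<Longrightarrow> length v \<le> length w"
  unfolding desc_def proof -
  assume "take (length v) w = v"
  hence "length (take (length v) w) = length v" by simp
  hence "length v = min (length v) (length w)" by simp
  thus "length v \<le> length w" by simp
qed

lemma desc_tree: "desc v w \<Longrightarrow> w \<in> tree m \<Longrightarrow> v \<in> tree m"
  unfolding desc_def by (metis tree_take)

lemma desc_refl[simp]: "desc v v" by (simp add: desc_def)

lemma desc_trans: "desc v z \<Longrightarrow> desc z w \<Longrightarrow> desc v w"
proof -
  assume a: "desc v z" "desc z w"
  have "length v \<le> length z" using desc_len[OF a(1)] .
  thus ?thesis using a unfolding desc_def by (metis min.absorb1 take_take)
qed

lemma desc_incomp: "length v = length v' \<Longrightarrow> v \<noteq> v' \<Longrightarrow> desc v w \<Longrightarrow> desc v' w \<Longrightarrow> False"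
  unfolding desc_def by simp

lemma desc_same_len: "desc v w \<Longrightarrow> length v = length w \<Longrightarrow> v = w"
  unfolding desc_def by simp

lemma aut_desc: assumes g: "is_aut m g" and w: "w \<in> tree m" and d: "desc v w"
  shows "desc (g v) (g w)"
proof -
  have v: "v \<in> tree m" using desc_tree[OF d w] .
  have "g v = take (length v) (g w)" using aut_take[OF g w, of "length v"] d by (simp add: desc_def)
  thus ?thesis using aut_len[OF g v] by (simp add: desc_def)
qed

lemma aut_desc_iff: assumes g: "is_aut m g" and w: "w \<in> tree m"
  shows "desc (g v) (g w) \<longleftrightarrow> desc v w"
proof
  assume d: "desc (g v) (g w)"
  have gi: "is_aut m (inv\<^bsub>AutT m\<^esub> g)" using AutT_inv_aut[OF g] .
  have "desc ((inv\<^bsub>AutT m\<^esub> g) (g v)) ((inv\<^bsub>AutT m\<^esub> g) (g w))"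
    using aut_desc[OF gi aut_tree[OF g w] d] .
  thus "desc v w" using AutT_inv_l[OF g] by simp
qed (rule aut_desc[OF g w])

locale BT =
  fixes m :: "nat \<Rightarrow> nat" and G :: "(nat list \<Rightarrow> nat list) set"
  assumes m2: "\<And>n. m n \<ge> 2" and sg: "subgroup G (AutT m)"
begin

lemma G_aut: "g \<in> G \<Longrightarrow> is_aut m g"
  using subgroup.subset[OF sg] by auto

lemma G_comp: "f \<in> G \<Longrightarrow> g \<in> G \<Longrightarrow> f \<circ> g \<in> G"
  using subgroup.m_closed[OF sg] by fastforce

lemma G_id: "id \<in> G"
  using subgroup.one_closed[OF sg] by simp

lemma G_inv: "g \<in> G \<Longrightarrow> inv\<^bsub>AutT m\<^esub> g \<in> G"
  using subgroup.m_inv_closed[OF sg] by simp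

lemma G_pow: "g \<in> G \<Longrightarrow> g [^]\<^bsub>AutT m\<^esub> (n::nat) \<in> G"
  by (induct n) (simp_all add: G_id G_comp)

lemma moves: "g \<in> G \<Longrightarrow> g \<noteq> id \<Longrightarrow> \<exists>w\<in>tree m. g w \<noteq> w"
proof (rule ccontr)
  assume g: "g \<in> G" "g \<noteq> id" "\<not> (\<exists>w\<in>tree m. g w \<noteq> w)"
  have "g = id"
  proof
    fix w show "g w = id w" using g aut_out[OF G_aut[OF g(1)]] by (cases "w \<in> tree m") auto
  qed
  thus False using g by simp
qed

lemma rist_G: "x \<in> rist m G v \<Longrightarrow> x \<in> G" by (simp add: rist_def)

lemma rist_fix: "x \<in> rist m G v \<Longrightarrow> w \<in> tree m \<Longrightarrow> \<not> desc v w \<Longrightarrow> x w = w"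
  by (simp add: rist_def)

lemma rist_fix_root: assumes x: "x \<in> rist m G v" and v: "v \<in> tree m" shows "x v = v"
proof (rule ccontr)
  assume ne: "x v \<noteq> v"
  have a: "is_aut m x" using G_aut rist_G x by blast
  have "x v \<in> tree m" using aut_tree[OF a v] .
  moreover have "\<not> desc v (x v)" using ne desc_same_len aut_len[OF a v] by metis
  ultimately have "x (x v) = x v" using rist_fix[OF x] by blast
  thus False using ne aut_inj[OF a] by (metis injD)
qed

lemma rist_desc: assumes x: "x \<in> rist m G v" and w: "w \<in> tree m" and d: "desc v w"
  shows "desc v (x w)" "x w \<in> tree m"
proof -
  have a: "is_aut m x" using G_aut rist_G x by blast
  have "desc (x v) (x w)" using aut_desc[OF a w d] .
  thus "desc v (x w)" using rist_fix_root[OF x desc_tree[OF d w]] by simp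
  show "x w \<in> tree m" using aut_tree[OF a w] .
qed

lemma rist_mono: "desc v z \<Longrightarrow> rist m G z \<subseteq> rist m G v"
  unfolding rist_def using desc_trans by blast

lemma rist_moves: "x \<in> rist m G v \<Longrightarrow> x \<noteq> id \<Longrightarrow> \<exists>w\<in>tree m. desc v w \<and> x w \<noteq> w"
  using moves[OF rist_G] rist_fix by metis

lemma rist_comm: assumes x: "x \<in> rist m G v" and y: "y \<in> rist m G v'"
  and l: "length v = length v'" and ne: "v \<noteq> v'"
  shows "x \<circ> y = y \<circ> x"
proof
  fix w
  have ax: "is_aut m x" and ay: "is_aut m y" using G_aut rist_G x y by blast+
  show "(x \<circ> y) w = (y \<circ> x) w"
  proof (cases "w \<in> tree m")
    case False thus ?thesis using aut_out[OF ax] aut_out[OF ay] by simp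
  next
    case w: True
    show ?thesis
    proof (cases "desc v w")
      case True
      hence "\<not> desc v' w" using desc_incomp[OF l ne] by blast
      moreover have "\<not> desc v' (x w)" using desc_incomp[OF l ne] rist_desc[OF x w True] by blast
      ultimately show ?thesis using rist_fix[OF y] w rist_desc[OF x w True] by simp
    next
      case nv: False
      show ?thesis
      proof (cases "desc v' w")
        case True
        hence "\<not> desc v (y w)" using desc_incomp[OF l ne] rist_desc[OF y w True] by blast
        thus ?thesis using rist_fix[OF x] w rist_desc[OF y w True] nv by simp
      next
        case False thus ?thesis using rist_fix[OF x] rist_fix[OF y] w nv by simp
      qed
    qed
  qed
qed

lemma rist_id: "id \<in> rist m G v" using G_id by (simp add: rist_def)

lemma rist_comp: "x \<in> rist m G v \<Longrightarrow> y \<in> rist m G v \<Longrightarrow> x \<circ> y \<in> rist m G v"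
  using G_comp by (simp add: rist_def)

lemma rist_inv: assumes x: "x \<in> rist m G v" shows "inv\<^bsub>AutT m\<^esub> x \<in> rist m G v"
proof -
  have a: "is_aut m x" using G_aut rist_G x by blast
  { fix w assume "w \<in> tree m" "\<not> desc v w"
    hence "x w = w" using rist_fix[OF x] by blast
    hence "(inv\<^bsub>AutT m\<^esub> x) w = w" using AutT_inv_l[OF a, of w] by simp }
  thus ?thesis using G_inv rist_G[OF x] by (simp add: rist_def)
qed

lemma rist_conj: assumes g: "g \<in> G" and x: "x \<in> rist m G v"
  shows "g \<circ> x \<circ> inv\<^bsub>AutT m\<^esub> g \<in> rist m G (g v)"
proof -
  have ag: "is_aut m g" using G_aut g by blast
  have gi: "is_aut m (inv\<^bsub>AutT m\<^esub> g)" using AutT_inv_aut[OF ag] .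
  have "g \<circ> x \<circ> inv\<^bsub>AutT m\<^esub> g \<in> G" using G_comp G_inv g rist_G[OF x] by blast
  moreover
  { fix w assume w: "w \<in> tree m" and nd: "\<not> desc (g v) w"
    let ?w = "(inv\<^bsub>AutT m\<^esub> g) w"
    have w': "?w \<in> tree m" using aut_tree[OF gi w] .
    have "\<not> desc v ?w" using nd aut_desc_iff[OF ag w', of v] AutT_inv_r[OF ag] by simp
    hence "x ?w = ?w" using rist_fix[OF x w'] by blast
    hence "(g \<circ> x \<circ> inv\<^bsub>AutT m\<^esub> g) w = w" using AutT_inv_r[OF ag] by simp }
  ultimately show ?thesis by (simp add: rist_def)
qed

end

lemma rcos_grp: "K #>\<^bsub>grp m G\<^esub> x = (\<lambda>h. h \<circ> x) ` K"
  by (auto simp: r_coset_def grp_def AutT_def)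

lemma rcosets_grp: "rcosets\<^bsub>grp m G\<^esub> K = (\<lambda>x. (\<lambda>h. h \<circ> x) ` K) ` G"
proof -
  have "rcosets\<^bsub>grp m G\<^esub> K = (\<lambda>x. K #>\<^bsub>grp m G\<^esub> x) ` G"
    by (auto simp: RCOSETS_def grp_def AutT_def)
  thus ?thesis by (simp add: rcos_grp)
qed

context BT begin

lemma pigeon:
  assumes fi: "finite_index m G K" and idK: "id \<in> K" and S: "S \<subseteq> G" and inf: "infinite S"
  shows "\<exists>x\<in>S. \<exists>y\<in>S. x \<noteq> y \<and> x \<circ> inv\<^bsub>AutT m\<^esub> y \<in> K"
proof -
  let ?f = "\<lambda>x. (\<lambda>h. h \<circ> x) ` K"
  have "finite (?f ` G)" using fi by (simp add: finite_index_def rcosets_grp)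
  hence "finite (?f ` S)" using S by (meson finite_subset image_mono)
  hence "\<not> inj_on ?f S" using inf finite_imageD by blast
  then obtain x y where xy: "x \<in> S" "y \<in> S" "x \<noteq> y" "?f x = ?f y" unfolding inj_on_def by blast
  have "x \<in> ?f x" using idK image_eqI[of x "\<lambda>h. h \<circ> x" id K] by simp
  hence "x \<in> ?f y" using xy(4) by simp
  then obtain h where h: "h \<in> K" "x = h \<circ> y" by blast
  have ay: "is_aut m y" using G_aut S xy(2) by blast
  have "x \<circ> inv\<^bsub>AutT m\<^esub> y = h"
  proof
    fix w show "(x \<circ> inv\<^bsub>AutT m\<^esub> y) w = h w" using h(2) AutT_inv_r[OF ay] by simp
  qed
  thus ?thesis using xy h by blast
qed

lemma level_card: "2 ^ n \<le> card (level m n) \<or> infinite (level m n)"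
proof -
  have sub: "{xs. set xs \<subseteq> {0,1} \<and> length xs = n} \<subseteq> level m n"
  proof
    fix xs assume "xs \<in> {xs. set xs \<subseteq> {0::nat,1} \<and> length xs = n}"
    hence a: "set xs \<subseteq> {0,1}" "length xs = n" by auto
    { fix i assume "i < length xs"
      hence "xs ! i \<in> {0,1}" using a(1) nth_mem by blast
      hence "xs ! i < m i" using m2[of i] by auto }
    thus "xs \<in> level m n" using a by (auto simp: level_def tree_def)
  qed
  have c: "card {xs. set xs \<subseteq> {0::nat,1} \<and> length xs = n} = 2 ^ n"
    using card_lists_length_eq[of "{0::nat,1}" n] by (simp add: numeral_2_eq_2)
  show ?thesis using card_mono[OF _ sub] c by auto
qed

lemma G_infinite: assumes lt: "level_transitive m G" shows "infinite G"
proof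
  assume fin: "finite G"
  let ?N = "card G"
  let ?v = "replicate ?N (0::nat)"
  have v: "?v \<in> level m ?N" using m2 by (auto simp: level_def tree_def less_le_trans[OF _ m2])
  have "level m ?N \<subseteq> (\<lambda>g. g ?v) ` G"
  proof
    fix w assume "w \<in> level m ?N"
    then obtain g where "g \<in> G" "g ?v = w" using lt v unfolding level_transitive_def by blast
    thus "w \<in> (\<lambda>g. g ?v) ` G" by blast
  qed
  moreover have "finite ((\<lambda>g. g ?v) ` G)" using fin by simp
  ultimately have f: "finite (level m ?N)" and "card (level m ?N) \<le> card ((\<lambda>g. g ?v) ` G)"
    using finite_subset card_mono by blast+
  moreover have "card ((\<lambda>g. g ?v) ` G) \<le> card G" using card_image_le fin by blast
  ultimately have "2 ^ ?N \<le> ?N" using level_card[of ?N] f by simp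
  moreover have "?N < 2 ^ ?N" by (rule less_exp)
  ultimately show False by simp
qed

end

locale BB = BT +
  assumes br: "branch m G"
begin

lemma lt: "level_transitive m G" using br by (simp add: branch_def)

lemma Ginf: "infinite G" using G_infinite[OF lt] .

lemma gen_id: "XX \<subseteq> {id} \<Longrightarrow> generate (AutT m) XX \<subseteq> {id}"
proof
  fix x assume X: "XX \<subseteq> {id}" and "x \<in> generate (AutT m) XX"
  have i: "inv\<^bsub>AutT m\<^esub> id = id" using AutT_inv[OF aut_id, of m] ainv_props(2)[OF aut_id, of m] by auto
  from \<open>x \<in> generate (AutT m) XX\<close> X i show "x \<in> {id}"
    by (induct x rule: generate.induct) auto
qed

lemma rist_nontriv: assumes v: "v \<in> tree m" shows "\<exists>x\<in>rist m G v. x \<noteq> id"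
proof (rule ccontr)
  assume "\<not> ?thesis"
  hence r0: "rist m G v \<subseteq> {id}" by auto
  let ?n = "length v"
  have vl: "v \<in> level m ?n" using v by (simp add: level_def)
  have "\<forall>v'\<in>level m ?n. rist m G v' \<subseteq> {id}"
  proof
    fix v' assume v': "v' \<in> level m ?n"
    then obtain g where g: "g \<in> G" "g v = v'" using lt vl unfolding level_transitive_def by blast
    have ag: "is_aut m g" using G_aut g by blast
    show "rist m G v' \<subseteq> {id}"
    proof
      fix x assume x: "x \<in> rist m G v'"
      have gi: "inv\<^bsub>AutT m\<^esub> g \<in> G" using G_inv g by blast
      have "inv\<^bsub>AutT m\<^esub> g \<circ> x \<circ> inv\<^bsub>AutT m\<^esub> (inv\<^bsub>AutT m\<^esub> g) \<in> rist m G ((inv\<^bsub>AutT m\<^esub> g) v')"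
        using rist_conj[OF gi x] .
      moreover have "inv\<^bsub>AutT m\<^esub> (inv\<^bsub>AutT m\<^esub> g) = g"
        using group.inv_inv[OF AutT_group] ag by simp
      moreover have "(inv\<^bsub>AutT m\<^esub> g) v' = v" using g AutT_inv_l[OF ag] by auto
      ultimately have "inv\<^bsub>AutT m\<^esub> g \<circ> x \<circ> g = id" using r0 by auto
      hence e: "\<And>w. (inv\<^bsub>AutT m\<^esub> g) (x (g w)) = w" by (metis comp_apply id_apply)
      have "x = id"
      proof
        fix w
        have "x w = x (g ((inv\<^bsub>AutT m\<^esub> g) w))" using AutT_inv_r[OF ag] by simp
        also have "\<dots> = g ((inv\<^bsub>AutT m\<^esub> g) (x (g ((inv\<^bsub>AutT m\<^esub> g) w))))" using AutT_inv_r[OF ag] by simp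
        also have "\<dots> = w" by (metis e AutT_inv_r[OF ag])
        finally show "x w = id w" by simp
      qed
      thus "x \<in> {id}" by simp
    qed
  qed
  hence "Rist m G ?n \<subseteq> {id}" unfolding Rist_def by (intro gen_id) blast
  hence R: "Rist m G ?n = {id}" unfolding Rist_def using generate.one[of "AutT m"] by auto
  have "finite (rcosets\<^bsub>grp m G\<^esub> (Rist m G ?n))" using br by (simp add: branch_def finite_index_def)
  hence "finite ((\<lambda>x. {x}) ` G)" by (simp add: rcosets_grp R)
  hence "finite G" by (rule finite_imageD) (simp add: inj_on_def)
  thus False using Ginf by simp
qed

lemma rist_infinite: assumes v: "v \<in> tree m" shows "infinite (rist m G v)"
proof -
  define z where "z d = v @ replicate d 1 @ [0::nat]" for d
  have zt: "z d \<in> tree m" for d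
  proof -
    { fix i assume i: "i < length (z d)"
      have "z d ! i < m i"
      proof (cases "i < length v")
        case True thus ?thesis using v by (simp add: z_def nth_append tree_def)
      next
        case False
        hence "z d ! i \<in> {0,1}" using i by (simp add: z_def nth_append nth_Cons' split: if_splits)
        thus ?thesis using m2[of i] by auto
      qed }
    thus ?thesis by (simp add: tree_def)
  qed
  have zd: "desc v (z d)" for d by (simp add: desc_def z_def)
  have inc: "\<not> (desc (z d) w \<and> desc (z d') w)" if "d < d'" for d d' w
  proof
    assume a: "desc (z d) w \<and> desc (z d') w"
    let ?i = "length v + d"
    have "?i < length (z d)" "?i < length (z d')" using that by (simp_all add: z_def)
    moreover have "take (length (z d)) w = z d" "take (length (z d')) w = z d'"
      using a unfolding desc_def by auto
    ultimately have "w ! ?i = z d ! ?i" "w ! ?i = z d' ! ?i"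
      by (metis nth_take)+
    moreover have "z d ! ?i = 0" "z d' ! ?i = 1" using that by (simp_all add: z_def nth_append)
    ultimately show False by simp
  qed
  have "\<forall>d. \<exists>e w. e \<in> rist m G (z d) \<and> w \<in> tree m \<and> desc (z d) w \<and> e w \<noteq> w"
  proof
    fix d
    obtain e where "e \<in> rist m G (z d)" "e \<noteq> id" using rist_nontriv[OF zt] by blast
    thus "\<exists>e w. e \<in> rist m G (z d) \<and> w \<in> tree m \<and> desc (z d) w \<and> e w \<noteq> w"
      using rist_moves by blast
  qed
  then obtain e w where ew: "\<And>d. e d \<in> rist m G (z d) \<and> w d \<in> tree m \<and> desc (z d) (w d) \<and> e d (w d) \<noteq> w d"
    by metis
  have "inj e"
  proof (rule injI)
    fix d d' assume eq: "e d = e d'"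
    show "d = d'"
    proof (rule ccontr)
      assume "d \<noteq> d'"
      hence "d < d' \<or> d' < d" by arith
      thus False
      proof
        assume "d < d'"
        hence "\<not> desc (z d') (w d)" using inc ew by blast
        hence "e d' (w d) = w d" using rist_fix ew by blast
        thus False using eq ew by metis
      next
        assume "d' < d"
        hence "\<not> desc (z d) (w d')" using inc ew by blast
        hence "e d (w d') = w d'" using rist_fix ew by blast
        thus False using eq ew by metis
      qed
    qed
  qed
  moreover have "range e \<subseteq> rist m G v" using ew rist_mono[OF zd] by blast
  moreover have "infinite (range e)" using range_inj_infinite[OF \<open>inj e\<close>] .
  ultimately show ?thesis using finite_subset by blast
qed

lemma K_rist:
  assumes fi: "finite_index m G K" and K: "subgroup K (grp m G)" and v: "v \<in> tree m"
  shows "\<exists>x\<in>K \<inter> rist m G v. x \<noteq> id"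
proof -
  have idK: "id \<in> K" using subgroup.one_closed[OF K] by (simp add: grp_def)
  obtain x y where xy: "x \<in> rist m G v" "y \<in> rist m G v" "x \<noteq> y" "x \<circ> inv\<^bsub>AutT m\<^esub> y \<in> K"
    using pigeon[OF fi idK _ rist_infinite[OF v]] rist_G by blast
  have "x \<circ> inv\<^bsub>AutT m\<^esub> y \<in> rist m G v" using rist_comp rist_inv xy by blast
  moreover have "x \<circ> inv\<^bsub>AutT m\<^esub> y \<noteq> id"
  proof
    assume "x \<circ> inv\<^bsub>AutT m\<^esub> y = id"
    hence "x \<circ> inv\<^bsub>AutT m\<^esub> y \<circ> y = y" by simp
    moreover have ay: "is_aut m y" using G_aut rist_G xy(2) by blast
    ultimately have "x = y" using AutT_inv_l[OF ay] by (auto simp: fun_eq_iff)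
    thus False using xy by simp
  qed
  ultimately show ?thesis using xy by blast
qed

end

lemma (in group) canc: "a \<in> carrier G \<Longrightarrow> b \<in> carrier G \<Longrightarrow> c \<in> carrier G \<Longrightarrow> a \<otimes> inv b \<otimes> (b \<otimes> c) = a \<otimes> c"
  by (simp add: m_assoc[symmetric]) (simp add: m_assoc)

lemma (in group) schreier:
  assumes S: "finite S" "S \<subseteq> carrier G" and K: "subgroup K G" and KS: "K \<subseteq> generate G S"
  and fin: "finite ((\<lambda>g. K #> g) ` generate G S)"
  shows "\<exists>Y. finite Y \<and> Y \<subseteq> K \<and> generate G Y = K"
proof -
  let ?Gs = "generate G S"
  have Gsc: "?Gs \<subseteq> carrier G" using generate_incl[OF S(2)] .
  have Gsg: "subgroup ?Gs G" using generate_is_subgroup[OF S(2)] .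
  have Kc: "K \<subseteq> carrier G" using subgroup.subset[OF K] .
  define rep where "rep C = (if C = K then \<one> else SOME t. t \<in> ?Gs \<and> C = K #> t)" for C
  define tau where "tau g = rep (K #> g)" for g
  have tau: "tau g \<in> ?Gs \<and> K #> tau g = K #> g" if g: "g \<in> ?Gs" for g
  proof (cases "K #> g = K")
    case True thus ?thesis using Kc subgroup.one_closed[OF Gsg] by (simp add: tau_def rep_def)
  next
    case False
    have "\<exists>t. t \<in> ?Gs \<and> K #> g = K #> t" using g by blast
    hence "tau g \<in> ?Gs \<and> K #> g = K #> tau g" unfolding tau_def rep_def using False
      by (simp only: if_False) (rule someI_ex)
    thus ?thesis by simp
  qed
  have tau_eq: "K #> g = K #> h \<Longrightarrow> tau g = tau h" for g h by (simp add: tau_def)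
  have taut: "tau (tau g) = tau g" if "g \<in> ?Gs" for g using tau_eq[OF conjunct2[OF tau[OF that]]] .
  have tauc: "tau g \<in> carrier G" if "g \<in> ?Gs" for g using tau[OF that] Gsc by blast
  have tauK: "g \<otimes> inv (tau g) \<in> K" if g: "g \<in> ?Gs" for g
  proof -
    have "g \<in> K #> g" using rcos_self[OF _ K] g Gsc by blast
    hence "g \<in> K #> tau g" using tau[OF g] by simp
    thus ?thesis using subgroup.rcos_module_imp[OF K is_group tauc[OF g]] by blast
  qed
  define T where "T = tau ` ?Gs"
  have T_eq: "T = rep ` ((\<lambda>g. K #> g) ` ?Gs)" unfolding T_def tau_def by auto
  have Tfin: "finite T" using fin T_eq by simp
  have TGs: "T \<subseteq> ?Gs" using tau T_def by blast
  have Tc: "T \<subseteq> carrier G" using TGs Gsc by blast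
  have tauT: "t \<in> T \<Longrightarrow> tau t = t" for t using taut T_def by auto
  define Y where "Y = (\<lambda>(t,s). t \<otimes> s \<otimes> inv (tau (t \<otimes> s))) ` (T \<times> S)"
  have Yfin: "finite Y" unfolding Y_def using Tfin S(1) by simp
  have ts: "t \<otimes> s \<in> ?Gs" if "t \<in> T" "s \<in> ?Gs" for t s
    using subgroup.m_closed[OF Gsg] that TGs by blast
  have YK: "Y \<subseteq> K"
  proof
    fix y assume "y \<in> Y"
    then obtain ts0 where ts0: "ts0 \<in> T \<times> S" "y = (\<lambda>(t,s). t \<otimes> s \<otimes> inv (tau (t \<otimes> s))) ts0"
      unfolding Y_def by (rule imageE)
    obtain t s where tsd: "ts0 = (t, s)" by (cases ts0)
    have y: "t \<in> T" "s \<in> S" "y = t \<otimes> s \<otimes> inv (tau (t \<otimes> s))" using ts0 tsd by auto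
    have "t \<otimes> s \<in> ?Gs" using ts[OF y(1) generate.incl[OF y(2)]] .
    from tauK[OF this] show "y \<in> K" using y(3) by simp
  qed
  have Yc: "Y \<subseteq> carrier G" using YK Kc by blast
  have cos: "K #> (a \<otimes> b) = K #> (c \<otimes> b)" if "K #> a = K #> c" "a \<in> carrier G" "b \<in> carrier G" "c \<in> carrier G" for a b c
  proof -
    have "K #> (a \<otimes> b) = (K #> a) #> b" using coset_mult_assoc[OF Kc that(2,3)] by simp
    also have "\<dots> = (K #> c) #> b" using that(1) by simp
    also have "\<dots> = K #> (c \<otimes> b)" using coset_mult_assoc[OF Kc that(4,3)] by simp
    finally show ?thesis .
  qed
  have main: "\<forall>t\<in>T. t \<otimes> g \<otimes> inv (tau (t \<otimes> g)) \<in> generate G Y" if g: "g \<in> ?Gs" for g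
    using g
  proof (induct g rule: generate.induct)
    case one
    show ?case
    proof
      fix t assume t: "t \<in> T"
      have "t \<in> carrier G" using t Tc by blast
      hence "t \<otimes> \<one> \<otimes> inv (tau (t \<otimes> \<one>)) = \<one>" using tauT[OF t] by simp
      thus "t \<otimes> \<one> \<otimes> inv (tau (t \<otimes> \<one>)) \<in> generate G Y" using generate.one[of G Y] by simp
    qed
  next
    case (incl s)
    show ?case
    proof
      fix t assume t: "t \<in> T"
      show "t \<otimes> s \<otimes> inv (tau (t \<otimes> s)) \<in> generate G Y"
        using t incl by (intro generate.incl) (auto simp: Y_def)
    qed
  next
    case (inv s)
    show ?case
    proof
      fix t assume t: "t \<in> T"
      have sc: "s \<in> carrier G" using inv S(2) by blast
      have tc: "t \<in> carrier G" using t Tc by blast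
      have tis: "t \<otimes> inv s \<in> ?Gs" using ts[OF t generate.inv[OF inv]] .
      define t' where "t' = tau (t \<otimes> inv s)"
      have t'T: "t' \<in> T" unfolding t'_def T_def using tis by blast
      have t'c: "t' \<in> carrier G" using t'T Tc by blast
      have "K #> t' = K #> (t \<otimes> inv s)" using tau[OF tis] t'_def by simp
      hence "K #> (t' \<otimes> s) = K #> (t \<otimes> inv s \<otimes> s)" using cos[OF _ t'c sc m_closed[OF tc inv_closed[OF sc]]] by blast
      moreover have "t \<otimes> inv s \<otimes> s = t" using sc tc by (simp add: m_assoc)
      ultimately have "K #> (t' \<otimes> s) = K #> t" by simp
      hence "tau (t' \<otimes> s) = tau t" by (rule tau_eq)
      hence tt: "tau (t' \<otimes> s) = t" using tauT[OF t] by simp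
      have "(t', s) \<in> T \<times> S" using t'T inv by blast
      hence "(\<lambda>(t,s). t \<otimes> s \<otimes> inv (tau (t \<otimes> s))) (t', s) \<in> Y" unfolding Y_def by (rule imageI)
      hence y: "t' \<otimes> s \<otimes> inv t \<in> Y" using tt by simp
      have "inv (t' \<otimes> s \<otimes> inv t) = t \<otimes> inv s \<otimes> inv t'"
        using sc tc t'c by (simp add: inv_mult_group m_assoc)
      hence "t \<otimes> inv s \<otimes> inv t' \<in> generate G Y" using generate.inv[OF y, of G] by simp
      thus "t \<otimes> inv s \<otimes> inv (tau (t \<otimes> inv s)) \<in> generate G Y" using t'_def by simp
    qed
  next
    case (eng g1 g2)
    show ?case
    proof
      fix t assume t: "t \<in> T"
      have g1c: "g1 \<in> carrier G" using subsetD[OF Gsc eng(1)] .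
      have g2c: "g2 \<in> carrier G" using subsetD[OF Gsc eng(3)] .
      have tc: "t \<in> carrier G" using t Tc by blast
      have tg1: "t \<otimes> g1 \<in> ?Gs" using ts[OF t eng(1)] .
      define t1 where "t1 = tau (t \<otimes> g1)"
      have t1T: "t1 \<in> T" unfolding t1_def T_def using tg1 by blast
      have t1c: "t1 \<in> carrier G" using t1T Tc by blast
      have A: "t \<otimes> g1 \<otimes> inv t1 \<in> generate G Y" using bspec[OF eng(2) t] t1_def by simp
      have B: "t1 \<otimes> g2 \<otimes> inv (tau (t1 \<otimes> g2)) \<in> generate G Y" using bspec[OF eng(4) t1T] .
      have "K #> t1 = K #> (t \<otimes> g1)" using tau[OF tg1] t1_def by simp
      hence "K #> (t1 \<otimes> g2) = K #> (t \<otimes> g1 \<otimes> g2)" using cos[OF _ t1c g2c m_closed[OF tc g1c]] by blast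
      moreover have "t \<otimes> g1 \<otimes> g2 = t \<otimes> (g1 \<otimes> g2)" using m_assoc[OF tc g1c g2c] .
      ultimately have "K #> (t1 \<otimes> g2) = K #> (t \<otimes> (g1 \<otimes> g2))" by simp
      hence "tau (t1 \<otimes> g2) = tau (t \<otimes> (g1 \<otimes> g2))" by (rule tau_eq)
      moreover have "tau (t1 \<otimes> g2) \<in> carrier G" using tauc[OF ts[OF t1T eng(3)]] .
      ultimately have "(t \<otimes> g1 \<otimes> inv t1) \<otimes> (t1 \<otimes> g2 \<otimes> inv (tau (t1 \<otimes> g2))) =
          t \<otimes> (g1 \<otimes> g2) \<otimes> inv (tau (t \<otimes> (g1 \<otimes> g2)))"
        using canc[of "t \<otimes> g1" t1 "g2 \<otimes> inv (tau (t1 \<otimes> g2))"] tc g1c g2c t1c by (simp add: m_assoc)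
      thus "t \<otimes> (g1 \<otimes> g2) \<otimes> inv (tau (t \<otimes> (g1 \<otimes> g2))) \<in> generate G Y"
        using generate.eng[OF A B] by simp
    qed
  qed
  have oneT: "\<one> \<in> T"
  proof -
    have "tau \<one> = \<one>" using Kc by (simp add: tau_def rep_def)
    thus ?thesis unfolding T_def using generate.one[of G S] by force
  qed
  have "K \<subseteq> generate G Y"
  proof
    fix k assume k: "k \<in> K"
    have kc: "k \<in> carrier G" using k Kc by blast
    have "K #> k = K" using subgroup.rcos_const[OF K is_group k] .
    hence "tau k = \<one>" using Kc by (simp add: tau_def rep_def)
    moreover have "\<one> \<otimes> k \<otimes> inv (tau (\<one> \<otimes> k)) \<in> generate G Y" using bspec[OF main[OF subsetD[OF KS k]] oneT] .
    ultimately show "k \<in> generate G Y" using kc by simp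
  qed
  moreover have "generate G Y \<subseteq> K" using generate_subgroup_incl[OF YK K] .
  ultimately show ?thesis using Yfin YK by blast
qed

definition proj :: "nat list \<Rightarrow> (nat list \<Rightarrow> nat list) \<Rightarrow> (nat list \<Rightarrow> nat list)" where
  "proj u g = (\<lambda>w. if desc u w then g w else w)"

lemma proj_id: "proj u id = id" by (auto simp: proj_def)

lemma proj_mult:
  assumes g1: "is_aut m g1" and g2: "is_aut m g2" and fu: "g2 u = u"
  shows "proj u (g1 \<circ> g2) = proj u g1 \<circ> proj u g2"
proof
  fix w show "proj u (g1 \<circ> g2) w = (proj u g1 \<circ> proj u g2) w"
  proof (cases "desc u w")
    case True
    have "desc u (g2 w)"
    proof (cases "w \<in> tree m")
      case True thus ?thesis using aut_desc[OF g2 True \<open>desc u w\<close>] fu by simp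
    next
      case False thus ?thesis using aut_out[OF g2] \<open>desc u w\<close> by simp
    qed
    thus ?thesis using True by (simp add: proj_def)
  qed (simp add: proj_def)
qed

context BT begin

lemma rist_subgroup: "subgroup (rist m G u) (AutT m)"
proof
  show "rist m G u \<subseteq> carrier (AutT m)" using G_aut rist_G by auto
  show "\<one>\<^bsub>AutT m\<^esub> \<in> rist m G u" using rist_id by simp
  fix x y assume "x \<in> rist m G u" "y \<in> rist m G u"
  thus "x \<otimes>\<^bsub>AutT m\<^esub> y \<in> rist m G u" using rist_comp by simp
next
  fix x assume "x \<in> rist m G u" thus "inv\<^bsub>AutT m\<^esub> x \<in> rist m G u" using rist_inv by simp
qed

lemma Rist_G: "Rist m G n \<subseteq> G"
  unfolding Rist_def
  by (rule group.generate_subgroup_incl[OF AutT_group _ sg]) (auto simp: rist_def)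

lemma proj_rist_same: assumes x: "x \<in> rist m G u" shows "proj u x = x"
proof
  fix w show "proj u x w = x w"
  proof (cases "desc u w")
    case False
    show ?thesis
    proof (cases "w \<in> tree m")
      case True thus ?thesis using rist_fix[OF x True False] False by (simp add: proj_def)
    next
      case F: False thus ?thesis using aut_out[OF G_aut[OF rist_G[OF x]] F] by (simp add: proj_def)
    qed
  qed (simp add: proj_def)
qed

lemma proj_rist_other: assumes x: "x \<in> rist m G v" and l: "length v = length u" and ne: "v \<noteq> u"
  shows "proj u x = id"
proof
  fix w show "proj u x w = id w"
  proof (cases "desc u w")
    case True
    hence nd: "\<not> desc v w" using desc_incomp[OF l ne] by blast
    show ?thesis
    proof (cases "w \<in> tree m")
      case True thus ?thesis using rist_fix[OF x True nd] by (simp add: proj_def)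
    next
      case F: False thus ?thesis using aut_out[OF G_aut[OF rist_G[OF x]] F] by (simp add: proj_def)
    qed
  qed (simp add: proj_def)
qed

lemma rist_level_fix: assumes x: "x \<in> rist m G v" and v: "v \<in> level m n" and v': "v' \<in> level m n"
  shows "x v' = v'"
proof (cases "v' = v")
  case True thus ?thesis using rist_fix_root[OF x] v by (simp add: level_def)
next
  case False
  hence "\<not> desc v v'" using v v' desc_same_len by (fastforce simp: level_def)
  thus ?thesis using rist_fix[OF x] v' by (simp add: level_def)
qed

lemma rist_gen_step: assumes x: "x \<in> rist m G v" and v: "v \<in> level m n" and u: "u \<in> level m n"
  shows "(\<forall>v'\<in>level m n. x v' = v') \<and> proj u x \<in> rist m G u"
proof -
  have "proj u x \<in> rist m G u"
  proof (cases "v = u")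
    case True thus ?thesis using proj_rist_same x by simp
  next
    case False thus ?thesis using proj_rist_other[OF x _ False] u v rist_id by (simp add: level_def)
  qed
  thus ?thesis using rist_level_fix[OF x v] by blast
qed

lemma Rist_proj: assumes u: "u \<in> level m n" and g: "g \<in> Rist m G n"
  shows "(\<forall>v'\<in>level m n. g v' = v') \<and> proj u g \<in> rist m G u"
  using g[unfolded Rist_def]
proof (induct g rule: generate.induct)
  case one thus ?case using rist_id[of u] by (simp add: proj_def id_def)
next
  case (incl h) thus ?case using rist_gen_step u by blast
next
  case (inv h)
  then obtain v where "v \<in> level m n" "h \<in> rist m G v" by blast
  thus ?case using rist_gen_step[OF rist_inv] u by blast
next
  case (eng h1 h2)
  have a1: "is_aut m h1" and a2: "is_aut m h2" using eng(1,3) Rist_G G_aut unfolding Rist_def by blast+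
  have "h2 u = u" using eng(4) u by blast
  hence "proj u (h1 \<circ> h2) = proj u h1 \<circ> proj u h2" using proj_mult[OF a1 a2] by blast
  moreover have "proj u h1 \<circ> proj u h2 \<in> rist m G u" using eng(2,4) rist_comp by blast
  ultimately have "proj u (h1 \<circ> h2) \<in> rist m G u" by simp
  moreover have "\<forall>v'\<in>level m n. (h1 \<circ> h2) v' = v'" using eng(2,4) by simp
  ultimately show ?case by (simp only: AutT_mult)
qed

end

locale BBF = BB +
  assumes fg: "fin_gen m G"
begin

lemma Rist_fg: "\<exists>Y. finite Y \<and> Y \<subseteq> Rist m G n \<and> generate (AutT m) Y = Rist m G n"
proof -
  obtain S where S: "finite S" "S \<subseteq> G" "generate (AutT m) S = G" using fg by (auto simp: fin_gen_def)
  have Sc: "S \<subseteq> carrier (AutT m)" using S(2) G_aut by auto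
  have Rsub: "subgroup (Rist m G n) (AutT m)" unfolding Rist_def
    by (rule group.generate_is_subgroup[OF AutT_group]) (auto simp: rist_def G_aut)
  have fi: "finite_index m G (Rist m G n)" using br by (simp add: branch_def)
  have "(\<lambda>g. Rist m G n #>\<^bsub>AutT m\<^esub> g) ` G = rcosets\<^bsub>grp m G\<^esub> (Rist m G n)"
    by (simp add: rcosets_grp r_coset_def AutT_def image_def) (auto simp: Setcompr_eq_image)
  hence fin: "finite ((\<lambda>g. Rist m G n #>\<^bsub>AutT m\<^esub> g) ` generate (AutT m) S)"
    using fi S(3) by (simp add: finite_index_def)
  show ?thesis using group.schreier[OF AutT_group S(1) Sc Rsub _ fin] Rist_G S(3) by blast
qed

lemma rist_fg: assumes u: "u \<in> tree m"
  shows "\<exists>Y. finite Y \<and> Y \<subseteq> rist m G u \<and> generate (AutT m) Y = rist m G u"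
proof -
  let ?n = "length u"
  have ul: "u \<in> level m ?n" using u by (simp add: level_def)
  obtain Y where Y: "finite Y" "Y \<subseteq> Rist m G ?n" "generate (AutT m) Y = Rist m G ?n"
    using Rist_fg by blast
  have PY: "proj u ` Y \<subseteq> rist m G u" using Rist_proj[OF ul] Y(2) by blast
  have "generate (AutT m) (proj u ` Y) \<subseteq> rist m G u"
    using group.generate_subgroup_incl[OF AutT_group PY rist_subgroup] .
  moreover have "rist m G u \<subseteq> generate (AutT m) (proj u ` Y)"
  proof
    fix x assume x: "x \<in> rist m G u"
    have "x \<in> Rist m G ?n" unfolding Rist_def using x ul by (blast intro: generate.incl)
    hence xg: "x \<in> generate (AutT m) Y" using Y(3) by simp
    have "\<And>g. g \<in> generate (AutT m) Y \<Longrightarrow> proj u g \<in> generate (AutT m) (proj u ` Y)"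
    proof -
      fix g assume "g \<in> generate (AutT m) Y"
      thus "proj u g \<in> generate (AutT m) (proj u ` Y)"
      proof (induct g rule: generate.induct)
        case one thus ?case using generate.one[of "AutT m" "proj u ` Y"] by (simp add: proj_def id_def)
      next
        case (incl h) thus ?case by (blast intro: generate.incl)
      next
        case (inv h)
        have hR: "h \<in> Rist m G ?n" using inv Y(2) by blast
        have ah: "is_aut m h" using hR Rist_G G_aut by blast
        have ih: "inv\<^bsub>AutT m\<^esub> h \<in> Rist m G ?n"
        proof -
          have "(\<Union>v\<in>level m ?n. rist m G v) \<subseteq> carrier (AutT m)" using G_aut rist_G by auto
          thus ?thesis using group.generate_m_inv_closed[OF AutT_group] hR unfolding Rist_def by blast
        qed
        have aih: "is_aut m (inv\<^bsub>AutT m\<^esub> h)" using AutT_inv_aut[OF ah] .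
        have fu: "h u = u" using Rist_proj[OF ul hR] ul by blast
        have "proj u (inv\<^bsub>AutT m\<^esub> h) \<circ> proj u h = proj u (inv\<^bsub>AutT m\<^esub> h \<circ> h)"
          using proj_mult[OF aih ah fu] by simp
        moreover have e0: "inv\<^bsub>AutT m\<^esub> h \<circ> h = id" using AutT_inv[OF ah] ainv_props(2)[OF ah] by simp
        ultimately have e: "proj u (inv\<^bsub>AutT m\<^esub> h) \<circ> proj u h = id" by (simp only: e0 proj_id)
        have c1: "is_aut m (proj u h)" using Rist_proj[OF ul hR] G_aut rist_G by blast
        have c2: "is_aut m (proj u (inv\<^bsub>AutT m\<^esub> h))" using Rist_proj[OF ul ih] G_aut rist_G by blast
        have "inv\<^bsub>AutT m\<^esub> (proj u h) = proj u (inv\<^bsub>AutT m\<^esub> h)"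
          by (rule group.inv_equality[OF AutT_group]) (use e c1 c2 in auto)
        moreover have "inv\<^bsub>AutT m\<^esub> (proj u h) \<in> generate (AutT m) (proj u ` Y)"
          using inv by (blast intro: generate.inv)
        ultimately show ?case by simp
      next
        case (eng h1 h2)
        have h1R: "h1 \<in> Rist m G ?n" and h2R: "h2 \<in> Rist m G ?n" using eng(1,3) Y(3) by auto
        have a1: "is_aut m h1" and a2: "is_aut m h2" using h1R h2R Rist_G G_aut by blast+
        have fu: "h2 u = u" using Rist_proj[OF ul h2R] ul by blast
        have "proj u (h1 \<circ> h2) = proj u h1 \<circ> proj u h2" using proj_mult[OF a1 a2 fu] .
        thus ?case using generate.eng[OF eng(2) eng(4)] by (simp only: AutT_mult)
      qed
    qed
    from this[OF xg] show "x \<in> generate (AutT m) (proj u ` Y)" using proj_rist_same[OF x] by simp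
  qed
  ultimately show ?thesis using Y(1) PY by (intro exI[of _ "proj u ` Y"]) auto
qed

end

lemma AutT_pow_add: "is_aut m a \<Longrightarrow> a [^]\<^bsub>AutT m\<^esub> (i + j::nat) = a [^]\<^bsub>AutT m\<^esub> i \<circ> a [^]\<^bsub>AutT m\<^esub> j"
  using monoid.nat_pow_mult[OF group.is_monoid[OF AutT_group], of a m i j] by simp

lemma AutT_pow_mult: "is_aut m a \<Longrightarrow> a [^]\<^bsub>AutT m\<^esub> (i * j::nat) = (a [^]\<^bsub>AutT m\<^esub> i) [^]\<^bsub>AutT m\<^esub> j"
  using monoid.nat_pow_pow[OF group.is_monoid[OF AutT_group], of a m i j] by simp

lemma AutT_pow_one: "a [^]\<^bsub>AutT m\<^esub> (1::nat) = a"
  by (simp add: nat_pow_def)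

lemma AutT_pow_id: "(id :: nat list \<Rightarrow> nat list) [^]\<^bsub>AutT m\<^esub> (n::nat) = id"
  by (induct n) simp_all

context BT begin

lemma torsion_elt:
  assumes g: "g \<in> G" "g \<noteq> id" and k: "(k::nat) > 0" "g [^]\<^bsub>AutT m\<^esub> k = id"
  shows "\<exists>a (p::nat) u. a \<in> G \<and> 2 \<le> p \<and> a [^]\<^bsub>AutT m\<^esub> p = id \<and> u \<in> tree m \<and>
            (\<forall>i. 0 < i \<and> i < p \<longrightarrow> (a [^]\<^bsub>AutT m\<^esub> i) u \<noteq> u)"
proof -
  have ag: "is_aut m g" using G_aut g by blast
  define D where "D = {d::nat. 0 < d \<and> (\<exists>j::nat. g [^]\<^bsub>AutT m\<^esub> j \<noteq> id \<and> (g [^]\<^bsub>AutT m\<^esub> j) [^]\<^bsub>AutT m\<^esub> d = id)}"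
  have kD: "k \<in> D" unfolding D_def using k g by (intro CollectI conjI exI[of _ 1]) (simp_all add: AutT_pow_one)
  define p where "p = (LEAST d. d \<in> D)"
  have pD: "p \<in> D" using LeastI[of "\<lambda>d. d \<in> D", OF kD] p_def by simp
  have pmin: "\<And>d. d \<in> D \<Longrightarrow> p \<le> d" unfolding p_def by (rule Least_le)
  obtain j :: nat where j: "g [^]\<^bsub>AutT m\<^esub> j \<noteq> id" "(g [^]\<^bsub>AutT m\<^esub> j) [^]\<^bsub>AutT m\<^esub> p = id" "0 < p"
    using pD unfolding D_def by blast
  define a where "a = g [^]\<^bsub>AutT m\<^esub> j"
  have aG: "a \<in> G" using G_pow g unfolding a_def by blast
  have aa: "is_aut m a" using G_aut aG by blast
  let ?A = "\<lambda>i::nat. a [^]\<^bsub>AutT m\<^esub> i"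
  have Anz: "?A i \<noteq> id" if "0 < i" "i < p" for i
  proof
    assume "?A i = id"
    hence "i \<in> D" unfolding D_def a_def using that j by blast
    thus False using pmin that by fastforce
  qed
  have p1: "p \<noteq> 1"
  proof
    assume "p = 1"
    hence "(g [^]\<^bsub>AutT m\<^esub> j) [^]\<^bsub>AutT m\<^esub> (1::nat) = id" using j(2) by simp
    thus False using j(1) by (simp only: AutT_pow_one)
  qed
  have "a \<noteq> id" using j(1) a_def by simp
  then obtain u0 where u0: "u0 \<in> tree m" "a u0 \<noteq> u0" using moves[OF aG] by blast
  define s where "s = (LEAST s. 0 < s \<and> ?A s u0 = u0)"
  have pS: "0 < p \<and> ?A p u0 = u0" using j a_def by simp
  have sS: "0 < s \<and> ?A s u0 = u0" using LeastI[of "\<lambda>s. 0 < s \<and> ?A s u0 = u0", OF pS] s_def by simp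
  have smin: "\<And>t. 0 < t \<Longrightarrow> ?A t u0 = u0 \<Longrightarrow> s \<le> t" unfolding s_def by (rule Least_le) simp
  have sp: "s \<le> p" using smin pS by blast
  have s1: "s \<noteq> 1"
  proof
    assume "s = 1"
    hence "?A 1 u0 = u0" using sS by simp
    thus False using u0(2) by (simp only: AutT_pow_one)
  qed
  have Asq: "?A (s * q) u0 = u0" for q
  proof (induct q)
    case 0 thus ?case by simp
  next
    case (Suc q)
    have "?A (s * Suc q) = ?A (s * q) \<circ> ?A s" using AutT_pow_add[OF aa, of "s*q" s] by (simp add: add.commute)
    thus ?case using Suc sS by simp
  qed
  have "s = p"
  proof (rule ccontr)
    assume "s \<noteq> p"
    hence slp: "s < p" using sp by simp
    define q where "q = p div s"
    define r where "r = p mod s"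
    have pe: "p = r + s * q" unfolding q_def r_def by simp
    have "?A p u0 = ?A r (?A (s * q) u0)" using AutT_pow_add[OF aa, of r "s * q"] pe by simp
    hence "?A r u0 = u0" using Asq pS by simp
    moreover have "r < s" unfolding r_def using sS by simp
    ultimately have r0: "r = 0" using smin[of r] by (cases "r = 0") auto
    hence pq: "p = s * q" using pe by simp
    have "q \<noteq> 0" using pq j(3) by auto
    moreover have "q \<noteq> 1" using pq slp by auto
    ultimately have q2: "q \<ge> 2" by arith
    have "1 < s" using s1 sS by arith
    hence qp: "q < p" using pq n_less_m_mult_n[of q s] q2 by simp
    have "?A s \<noteq> id" using Anz sS slp by blast
    moreover have "?A s = g [^]\<^bsub>AutT m\<^esub> (j * s)" using AutT_pow_mult[OF ag] a_def by simp
    moreover have "(?A s) [^]\<^bsub>AutT m\<^esub> q = id" using AutT_pow_mult[OF aa, of s q] pq j(2) a_def by simp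
    ultimately have "q \<in> D" unfolding D_def using q2 by auto
    thus False using pmin qp by fastforce
  qed
  have o: "\<forall>i. 0 < i \<and> i < p \<longrightarrow> ?A i u0 \<noteq> u0"
  proof (intro allI impI)
    fix i assume i: "0 < i \<and> i < p"
    show "?A i u0 \<noteq> u0"
    proof
      assume "?A i u0 = u0"
      hence "s \<le> i" using smin i by blast
      thus False using i \<open>s = p\<close> by simp
    qed
  qed
  have p2: "2 \<le> p" using p1 j(3) by simp
  have ap: "a [^]\<^bsub>AutT m\<^esub> p = id" using j(2) unfolding a_def .
  show ?thesis by (rule exI[of _ a], rule exI[of _ p], rule exI[of _ u0]) (intro conjI aG p2 ap u0(1) o)
qed

end

primrec Dn :: "(nat \<Rightarrow> (nat list \<Rightarrow> nat list)) \<Rightarrow> nat \<Rightarrow> (nat list \<Rightarrow> nat list)" where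
  "Dn f 0 = id"
| "Dn f (Suc n) = f n \<circ> Dn f n"

context BT begin

lemma grp_sub_to_aut: assumes K: "subgroup K (grp m G)" shows "subgroup K (AutT m)"
proof -
  have KG: "K \<subseteq> G" using subgroup.subset[OF K] by (simp add: grp_def AutT_def)
  show ?thesis
  proof
    show "K \<subseteq> carrier (AutT m)" using KG G_aut by auto
    show "\<one>\<^bsub>AutT m\<^esub> \<in> K" using subgroup.one_closed[OF K] by (simp add: grp_def AutT_def)
    fix x y assume "x \<in> K" "y \<in> K"
    thus "x \<otimes>\<^bsub>AutT m\<^esub> y \<in> K" using subgroup.m_closed[OF K] by (simp add: grp_def AutT_def)
  next
    fix x assume x: "x \<in> K"
    have "inv\<^bsub>grp m G\<^esub> x \<in> K" using subgroup.m_inv_closed[OF K x] .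
    moreover have "inv\<^bsub>grp m G\<^esub> x = inv\<^bsub>AutT m\<^esub> x"
      unfolding grp_def using group.m_inv_consistent[OF AutT_group sg] x KG by blast
    ultimately show "inv\<^bsub>AutT m\<^esub> x \<in> K" by simp
  qed
qed

lemma aut_sub_to_grp: assumes K: "subgroup K (AutT m)" and KG: "K \<subseteq> G" shows "subgroup K (grp m G)"
  unfolding grp_def by (rule group.subgroup_incl[OF AutT_group K sg KG])

lemma grp_group: "subgroup K (grp m G) \<Longrightarrow> group (grp m K)"
  using subgroup.subgroup_is_group[OF grp_sub_to_aut AutT_group] by (simp add: grp_def)

end

locale MM = BBF +
  fixes a :: "nat list \<Rightarrow> nat list" and p :: nat and u :: "nat list"
  assumes aG: "a \<in> G" and p2: "2 \<le> p" and ap: "a [^]\<^bsub>AutT m\<^esub> p = id" and ut: "u \<in> tree m"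
    and orb: "\<And>i. 0 < i \<Longrightarrow> i < p \<Longrightarrow> (a [^]\<^bsub>AutT m\<^esub> i) u \<noteq> u"
begin

definition A :: "nat \<Rightarrow> nat list \<Rightarrow> nat list" where "A i = a [^]\<^bsub>AutT m\<^esub> i"

lemma aa: "is_aut m a" using G_aut aG by blast
lemma A_G: "A i \<in> G" unfolding A_def using G_pow aG by blast
lemma A_aut: "is_aut m (A i)" using G_aut A_G by blast
lemma A_add: "A (i + j) = A i \<circ> A j" unfolding A_def using AutT_pow_add[OF aa] .
lemma A_0: "A 0 = id" by (simp add: A_def)
lemma A_1: "A 1 = a" by (simp add: A_def AutT_pow_one)
lemma A_p: "A p = id" using ap by (simp add: A_def)
lemma A_pk: "A (p * k) = id" unfolding A_def using AutT_pow_mult[OF aa, of p k] ap AutT_pow_id by simp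
lemma A_mod: "A (i mod p) = A i"
proof -
  have "A i = A (p * (i div p) + i mod p)" by simp
  also have "\<dots> = A (p * (i div p)) \<circ> A (i mod p)" by (rule A_add)
  also have "\<dots> = A (i mod p)" using A_pk by simp
  finally show ?thesis by simp
qed
lemma A_inv1: "i \<le> p \<Longrightarrow> A i \<circ> A (p - i) = id" using A_add[of i "p - i"] A_p by simp
lemma A_inv2: "i \<le> p \<Longrightarrow> A (p - i) \<circ> A i = id" using A_add[of "p - i" i] A_p by simp
lemma A_inv2': "i \<le> p \<Longrightarrow> A (p - i) (A i w) = w" using A_inv2 by (metis comp_apply id_apply)
lemma A_inv1': "i \<le> p \<Longrightarrow> A i (A (p - i) w) = w" using A_inv1 by (metis comp_apply id_apply)
lemma A_invG: "i \<le> p \<Longrightarrow> inv\<^bsub>AutT m\<^esub> (A i) = A (p - i)"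
  by (rule group.inv_equality[OF AutT_group]) (simp_all add: A_inv2 A_aut)

lemma A_fix_u: assumes "A j u = u" shows "A j = id"
proof -
  have "A (j mod p) u = u" using assms A_mod by simp
  moreover have "j mod p < p" using p2 by simp
  ultimately have "j mod p = 0" using orb[of "j mod p"] unfolding A_def by (cases "j mod p = 0") auto
  thus ?thesis using A_mod A_0 by metis
qed

lemma orb_dist: assumes i: "i < p" and i': "i' < p" and e: "A i u = A i' u" shows "i = i'"
proof (rule ccontr)
  assume ne: "i \<noteq> i'"
  { fix x y assume xy: "x < y" "y < p" "A x u = A y u"
    have "A y = A x \<circ> A (y - x)" using A_add[of x "y - x"] xy by simp
    hence "A x (A (y - x) u) = A x u" using xy by simp
    hence "A (y - x) u = u" using aut_inj[OF A_aut] by (metis injD)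
    hence False using orb[of "y - x"] xy unfolding A_def by simp }
  thus False using ne i i' e by (metis linorder_neqE_nat)
qed

lemma Au_tree: "A i u \<in> tree m" using aut_tree[OF A_aut ut] .
lemma Au_len: "length (A i u) = length u" using aut_len[OF A_aut ut] .

lemma A_desc: "w' \<in> tree m \<Longrightarrow> desc u w' \<Longrightarrow> desc (A i u) (A i w') \<and> A i w' \<in> tree m"
  using aut_desc[OF A_aut] aut_tree[OF A_aut] by blast

lemma desc_orbit: assumes w: "w \<in> tree m" and d: "desc (A i u) w" and i: "i \<le> p"
  shows "w = A i (A (p - i) w) \<and> desc u (A (p - i) w) \<and> A (p - i) w \<in> tree m"
proof -
  have "desc (A (p - i) (A i u)) (A (p - i) w)" using aut_desc[OF A_aut w d] .
  thus ?thesis using A_inv2'[OF i] A_inv1'[OF i] aut_tree[OF A_aut w] by simp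
qed

definition cq :: "(nat list \<Rightarrow> nat list) \<Rightarrow> nat \<Rightarrow> nat list \<Rightarrow> nat list" where
  "cq q l = A l \<circ> q \<circ> A (p - l)"

definition Del :: "(nat list \<Rightarrow> nat list) \<Rightarrow> nat list \<Rightarrow> nat list" where
  "Del q = Dn (cq q) p"

lemma cq_rist: assumes q: "q \<in> rist m G u" and l: "l \<le> p" shows "cq q l \<in> rist m G (A l u)"
  using rist_conj[OF A_G q, of l] A_invG[OF l] by (simp add: cq_def)

lemma Dn_G: "q \<in> rist m G u \<Longrightarrow> n \<le> p \<Longrightarrow> Dn (cq q) n \<in> G"
  by (induct n) (auto simp: G_id intro!: G_comp rist_G[OF cq_rist])

lemma Del_G: "q \<in> rist m G u \<Longrightarrow> Del q \<in> G" using Dn_G by (simp add: Del_def)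

lemma Dn_eval: assumes q: "q \<in> rist m G u" and i: "i < p" and w': "w' \<in> tree m" "desc u w'"
  shows "n \<le> p \<Longrightarrow> Dn (cq q) n (A i w') = (if i < n then A i (q w') else A i w')"
proof (induct n)
  case 0 thus ?case by simp
next
  case (Suc n)
  have np: "n < p" using Suc by simp
  have cr: "cq q n \<in> rist m G (A n u)" using cq_rist[OF q] np by simp
  have qw: "q w' \<in> tree m" "desc u (q w')" using rist_desc[OF q w'(1) w'(2)] by auto
  have fx: "cq q n z = z" if z: "z \<in> tree m" "desc (A i u) z" and ne: "i \<noteq> n" for z
  proof -
    have "A n u \<noteq> A i u" using orb_dist[OF np i] ne by metis
    hence "\<not> desc (A n u) z" using desc_incomp[OF _ _ _ z(2)] Au_len by metis
    thus ?thesis using rist_fix[OF cr z(1)] by blast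
  qed
  show ?case
  proof (cases "i < n")
    case True
    hence "Dn (cq q) (Suc n) (A i w') = cq q n (A i (q w'))" using Suc by simp
    also have "\<dots> = A i (q w')" using fx A_desc[OF qw] True by simp
    finally show ?thesis using True by simp
  next
    case False
    show ?thesis
    proof (cases "i = n")
      case True
      have "Dn (cq q) (Suc n) (A i w') = cq q n (A n w')" using Suc True by simp
      also have "\<dots> = A n (q w')" unfolding cq_def using A_inv2'[of n] np by simp
      finally show ?thesis using True by simp
    next
      case F2: False
      hence "Dn (cq q) (Suc n) (A i w') = cq q n (A i w')" using Suc False by simp
      also have "\<dots> = A i w'" using fx A_desc[OF w'] F2 by simp
      finally show ?thesis using False F2 by simp
    qed
  qed
qed

lemma Del_eval: "q \<in> rist m G u \<Longrightarrow> i < p \<Longrightarrow> w' \<in> tree m \<Longrightarrow> desc u w' \<Longrightarrow> Del q (A i w') = A i (q w')"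
  using Dn_eval[of q i w' p] by (simp add: Del_def)

lemma Dn_out: assumes q: "q \<in> rist m G u" and w: "w \<in> tree m" and nd: "\<forall>i<p. \<not> desc (A i u) w"
  shows "n \<le> p \<Longrightarrow> Dn (cq q) n w = w"
proof (induct n)
  case (Suc n)
  have "cq q n \<in> rist m G (A n u)" using cq_rist[OF q] Suc by simp
  thus ?case using rist_fix[OF _ w] nd Suc by simp
qed simp

lemma Del_out: "q \<in> rist m G u \<Longrightarrow> w \<in> tree m \<Longrightarrow> \<forall>i<p. \<not> desc (A i u) w \<Longrightarrow> Del q w = w"
  using Dn_out by (simp add: Del_def)

lemma Del_mult: assumes q1: "q1 \<in> rist m G u" and q2: "q2 \<in> rist m G u"
  shows "Del (q1 \<circ> q2) = Del q1 \<circ> Del q2"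
proof
  fix w
  have q12: "q1 \<circ> q2 \<in> rist m G u" using rist_comp q1 q2 by blast
  show "Del (q1 \<circ> q2) w = (Del q1 \<circ> Del q2) w"
  proof (cases "w \<in> tree m")
    case False thus ?thesis using aut_out[OF G_aut[OF Del_G]] q1 q2 q12 by simp
  next
    case w: True
    show ?thesis
    proof (cases "\<exists>i<p. desc (A i u) w")
      case True
      then obtain i where i: "i < p" "desc (A i u) w" by blast
      define w' where "w' = A (p - i) w"
      have w': "w = A i w'" "desc u w'" "w' \<in> tree m" using desc_orbit[OF w i(2)] i(1) w'_def by auto
      have q2w: "q2 w' \<in> tree m" "desc u (q2 w')" using rist_desc[OF q2 w'(3) w'(2)] by auto
      show ?thesis using Del_eval[OF q12 i(1) w'(3,2)] Del_eval[OF q2 i(1) w'(3,2)]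
        Del_eval[OF q1 i(1) q2w] w'(1) by simp
    next
      case False thus ?thesis using Del_out[OF _ w] q1 q2 q12 by simp
    qed
  qed
qed

lemma Del_id: "Del id = id"
proof
  fix w show "Del id w = id w"
  proof (cases "w \<in> tree m")
    case False thus ?thesis using aut_out[OF G_aut[OF Del_G[OF rist_id]]] by simp
  next
    case w: True
    show ?thesis
    proof (cases "\<exists>i<p. desc (A i u) w")
      case True
      then obtain i where i: "i < p" "desc (A i u) w" by blast
      have w': "w = A i (A (p - i) w)" "desc u (A (p - i) w)" "A (p - i) w \<in> tree m"
        using desc_orbit[OF w i(2)] i(1) by auto
      show ?thesis using Del_eval[OF rist_id i(1) w'(3,2)] w'(1) by simp
    next
      case False thus ?thesis using Del_out[OF rist_id w] by simp
    qed
  qed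
qed

lemma Del_inv: assumes q: "q \<in> rist m G u" shows "Del (inv\<^bsub>AutT m\<^esub> q) = inv\<^bsub>AutT m\<^esub> (Del q)"
proof -
  have iq: "inv\<^bsub>AutT m\<^esub> q \<in> rist m G u" using rist_inv[OF q] .
  have aq: "is_aut m q" using G_aut rist_G q by blast
  have "Del (inv\<^bsub>AutT m\<^esub> q) \<circ> Del q = Del (inv\<^bsub>AutT m\<^esub> q \<circ> q)" using Del_mult[OF iq q] by simp
  moreover have e0: "inv\<^bsub>AutT m\<^esub> q \<circ> q = id" using AutT_inv[OF aq] ainv_props(2)[OF aq] by simp
  ultimately have e: "Del (inv\<^bsub>AutT m\<^esub> q) \<circ> Del q = id" by (simp only: e0 Del_id)
  show ?thesis
    by (rule group.inv_equality[OF AutT_group, symmetric]) (use e G_aut Del_G iq q in auto)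
qed

end

context MM begin

definition Yu where "Yu = (SOME Y. finite Y \<and> Y \<subseteq> rist m G u \<and> generate (AutT m) Y = rist m G u)"

lemma Yu: "finite Yu" "Yu \<subseteq> rist m G u" "generate (AutT m) Yu = rist m G u"
  using someI_ex[OF rist_fg[OF ut]] unfolding Yu_def by auto

definition Hs where "Hs = generate (AutT m) (insert a (Del ` Yu))"

lemma gens_G: "insert a (Del ` Yu) \<subseteq> G" using aG Del_G Yu(2) by auto

lemma gens_c: "insert a (Del ` Yu) \<subseteq> carrier (AutT m)" using gens_G G_aut by auto

lemma H_subA: "subgroup Hs (AutT m)"
  unfolding Hs_def using group.generate_is_subgroup[OF AutT_group gens_c] .

lemma H_G: "Hs \<subseteq> G"
  unfolding Hs_def using group.generate_subgroup_incl[OF AutT_group gens_G sg] .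

lemma H_grp: "subgroup Hs (grp m G)" using aut_sub_to_grp[OF H_subA H_G] .

lemma H_fg: "fin_gen m Hs"
  unfolding fin_gen_def
proof (intro exI conjI)
  show "finite (insert a (Del ` Yu))" using Yu(1) by simp
  show "insert a (Del ` Yu) \<subseteq> Hs" unfolding Hs_def by (blast intro: generate.incl)
qed (simp add: Hs_def)

lemma H_id: "id \<in> Hs" using subgroup.one_closed[OF H_subA] by simp
lemma H_comp: "x \<in> Hs \<Longrightarrow> y \<in> Hs \<Longrightarrow> x \<circ> y \<in> Hs" using subgroup.m_closed[OF H_subA] by fastforce
lemma H_inv: "x \<in> Hs \<Longrightarrow> inv\<^bsub>AutT m\<^esub> x \<in> Hs" using subgroup.m_inv_closed[OF H_subA] by blast

lemma a_H: "a \<in> Hs" unfolding Hs_def by (blast intro: generate.incl)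

lemma A_H: "A i \<in> Hs"
proof (induct i)
  case 0 thus ?case using H_id A_0 by (simp add: id_def)
next
  case (Suc i)
  have "A (Suc i) = A i \<circ> a" using A_add[of i 1] A_1 by simp
  thus ?case using H_comp[OF Suc a_H] by (simp only:)
qed

lemma Del_H: assumes q: "q \<in> rist m G u" shows "Del q \<in> Hs"
proof -
  have "q \<in> generate (AutT m) Yu" using q Yu(3) by simp
  thus ?thesis
  proof (induct q rule: generate.induct)
    case one thus ?case using Del_id H_id by (simp add: id_def)
  next
    case (incl h) thus ?case unfolding Hs_def by (blast intro: generate.incl)
  next
    case (inv h)
    have "Del h \<in> Hs" unfolding Hs_def using inv by (blast intro: generate.incl)
    thus ?case using Del_inv[of h] inv Yu(2) H_inv by auto
  next
    case (eng h1 h2)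
    have "h1 \<in> rist m G u" "h2 \<in> rist m G u" using eng(1,3) Yu(3) by auto
    hence "Del (h1 \<circ> h2) = Del h1 \<circ> Del h2" using Del_mult by blast
    thus ?case using H_comp[OF eng(2,4)] by (simp only: AutT_mult)
  qed
qed

definition Xs where
  "Xs = {h. \<exists>j q. q \<in> rist m G u \<and> (\<forall>i<p. \<forall>w'. w' \<in> tree m \<and> desc u w' \<longrightarrow> h (A i w') = A (i + j) (q w'))}"

lemma Xs_comp: assumes h1: "h1 \<in> Xs" and h2: "h2 \<in> Xs" shows "h1 \<circ> h2 \<in> Xs"
proof -
  obtain j1 q1 where 1: "q1 \<in> rist m G u" "\<And>i w'. i < p \<Longrightarrow> w' \<in> tree m \<Longrightarrow> desc u w' \<Longrightarrow> h1 (A i w') = A (i + j1) (q1 w')"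
    using h1 unfolding Xs_def by blast
  obtain j2 q2 where 2: "q2 \<in> rist m G u" "\<And>i w'. i < p \<Longrightarrow> w' \<in> tree m \<Longrightarrow> desc u w' \<Longrightarrow> h2 (A i w') = A (i + j2) (q2 w')"
    using h2 unfolding Xs_def by blast
  have "\<forall>i<p. \<forall>w'. w' \<in> tree m \<and> desc u w' \<longrightarrow> (h1 \<circ> h2) (A i w') = A (i + (j1 + j2)) ((q1 \<circ> q2) w')"
  proof (intro allI impI)
    fix i w' assume i: "i < p" and w': "w' \<in> tree m \<and> desc u w'"
    have qw: "q2 w' \<in> tree m" "desc u (q2 w')" using rist_desc[OF 2(1)] w' by auto
    have ip: "(i + j2) mod p < p" using p2 by simp
    have "(h1 \<circ> h2) (A i w') = h1 (A ((i + j2) mod p) (q2 w'))" using 2(2)[OF i] w' A_mod by simp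
    also have "\<dots> = A ((i + j2) mod p + j1) (q1 (q2 w'))" using 1(2)[OF ip qw] .
    also have "\<dots> = A (i + (j1 + j2)) (q1 (q2 w'))"
      using A_add[of "(i + j2) mod p" j1] A_add[of "i + j2" j1] A_mod[of "i + j2"] by (simp add: ac_simps)
    finally show "(h1 \<circ> h2) (A i w') = A (i + (j1 + j2)) ((q1 \<circ> q2) w')" by simp
  qed
  moreover have "q1 \<circ> q2 \<in> rist m G u" using rist_comp 1(1) 2(1) by blast
  ultimately show ?thesis unfolding Xs_def by blast
qed

lemma Xs_pow: "A k \<in> Xs"
proof -
  have "A (i + k) = A k \<circ> A i" for i using A_add[of k i] by (simp add: add.commute)
  hence "\<forall>i<p. \<forall>w'. w' \<in> tree m \<and> desc u w' \<longrightarrow> A k (A i w') = A (i + k) (id w')"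
    by simp
  thus ?thesis unfolding Xs_def using rist_id by blast
qed

lemma Xs_Del: assumes q: "q \<in> rist m G u" shows "Del q \<in> Xs"
proof -
  have "\<forall>i<p. \<forall>w'. w' \<in> tree m \<and> desc u w' \<longrightarrow> Del q (A i w') = A (i + 0) (q w')"
    using Del_eval[OF q] by simp
  thus ?thesis unfolding Xs_def using q by blast
qed

lemma H_Xs: "Hs \<subseteq> Xs"
proof
  fix h assume "h \<in> Hs"
  thus "h \<in> Xs" unfolding Hs_def
  proof (induct h rule: generate.induct)
    case one thus ?case using Xs_pow[of 0] A_0 by (simp add: id_def)
  next
    case (incl h) thus ?case using Xs_pow[of 1] A_1 Xs_Del Yu(2) by auto
  next
    case (inv h)
    show ?case
    proof (cases "h = a")
      case True
      have "inv\<^bsub>AutT m\<^esub> a = A (p - 1)" using A_invG[of 1] A_1 p2 by simp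
      thus ?thesis using True Xs_pow by simp
    next
      case False
      then obtain y where y: "y \<in> Yu" "h = Del y" using inv by blast
      have "y \<in> rist m G u" using y Yu(2) by blast
      hence "Del (inv\<^bsub>AutT m\<^esub> y) \<in> Xs" using Xs_Del rist_inv by blast
      thus ?thesis using Del_inv[OF \<open>y \<in> rist m G u\<close>] y by simp
    qed
  next
    case (eng h1 h2) thus ?case using Xs_comp by (simp only: AutT_mult)
  qed
qed

end

lemma aut_inv_comp1: "is_aut m f \<Longrightarrow> f \<circ> inv\<^bsub>AutT m\<^esub> f = id"
  using AutT_inv ainv_props(3) by metis
lemma aut_inv_comp2: "is_aut m f \<Longrightarrow> inv\<^bsub>AutT m\<^esub> f \<circ> f = id"
  using AutT_inv ainv_props(2) by metis

locale RR = MM +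
  fixes K :: "(nat list \<Rightarrow> nat list) set" and r :: "(nat list \<Rightarrow> nat list) \<Rightarrow> (nat list \<Rightarrow> nat list)"
  assumes Kg: "subgroup K (grp m G)" and HK: "Hs \<subseteq> K" and fiK: "finite_index m G K"
    and rh: "r \<in> hom (grp m K) (grp m Hs)" and rid: "\<And>h. h \<in> Hs \<Longrightarrow> r h = h"
begin

lemma KA: "subgroup K (AutT m)" using grp_sub_to_aut[OF Kg] .
lemma KG: "K \<subseteq> G" using subgroup.subset[OF Kg] by (simp add: grp_def AutT_def)
lemma K_aut: "x \<in> K \<Longrightarrow> is_aut m x" using KG G_aut by blast
lemma K_comp: "x \<in> K \<Longrightarrow> y \<in> K \<Longrightarrow> x \<circ> y \<in> K" using subgroup.m_closed[OF KA] by fastforce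
lemma K_inv: "x \<in> K \<Longrightarrow> inv\<^bsub>AutT m\<^esub> x \<in> K" using subgroup.m_inv_closed[OF KA] by blast
lemma K_id: "id \<in> K" using subgroup.one_closed[OF KA] by simp

lemma r_H: "x \<in> K \<Longrightarrow> r x \<in> Hs"
  using rh unfolding hom_def grp_def AutT_def by auto
lemma r_mult: "x \<in> K \<Longrightarrow> y \<in> K \<Longrightarrow> r (x \<circ> y) = r x \<circ> r y"
  using rh unfolding hom_def grp_def AutT_def by auto
lemma r_aut: "x \<in> K \<Longrightarrow> is_aut m (r x)" using r_H H_G G_aut by blast
lemma r_inv: assumes x: "x \<in> K" shows "r (inv\<^bsub>AutT m\<^esub> x) = inv\<^bsub>AutT m\<^esub> (r x)"
proof -
  have "r (inv\<^bsub>AutT m\<^esub> x) \<circ> r x = r (inv\<^bsub>AutT m\<^esub> x \<circ> x)" using r_mult K_inv x by simp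
  moreover have e0: "inv\<^bsub>AutT m\<^esub> x \<circ> x = id" using aut_inv_comp2 K_aut x by blast
  moreover have "r id = id" using rid H_id by blast
  ultimately have e: "r (inv\<^bsub>AutT m\<^esub> x) \<circ> r x = id" by (simp only:)
  show ?thesis
    by (rule group.inv_equality[OF AutT_group, symmetric]) (use e r_aut x K_inv in auto)
qed

lemma A_K: "A i \<in> K" using A_H HK by blast

lemma r_Dn: assumes t: "t \<in> K" "r t = id" shows "n \<le> p \<Longrightarrow> Dn (cq t) n \<in> K \<and> r (Dn (cq t) n) = id"
proof (induct n)
  case 0 thus ?case using K_id rid H_id by (simp add: id_def)
next
  case (Suc n)
  have ck: "cq t n \<in> K" unfolding cq_def using K_comp A_K t(1) by blast
  have "r (cq t n) = r (A n) \<circ> r t \<circ> r (A (p - n))" unfolding cq_def using r_mult K_comp A_K t(1) by simp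
  also have "\<dots> = id" using rid A_H t(2) A_inv1[of n] Suc by simp
  finally have rc: "r (cq t n) = id" .
  have e: "Dn (cq t) (Suc n) = cq t n \<circ> Dn (cq t) n" by simp
  have "Dn (cq t) n \<in> K" "r (Dn (cq t) n) = id" using Suc by auto
  hence "cq t n \<circ> Dn (cq t) n \<in> K" "r (cq t n \<circ> Dn (cq t) n) = id \<circ> id"
    using K_comp[OF ck] r_mult[OF ck] rc by auto
  thus ?case using e by (simp only: comp_id)
qed

lemma contradiction: False
proof -
  obtain k where k: "k \<in> K" "k \<in> rist m G u" "k \<noteq> id" using K_rist[OF fiK Kg ut] by blast
  define h where "h = r k"
  have hH: "h \<in> Hs" using r_H k h_def by blast
  obtain j q where jq: "q \<in> rist m G u"
    "\<And>i w'. i < p \<Longrightarrow> w' \<in> tree m \<Longrightarrow> desc u w' \<Longrightarrow> h (A i w') = A (i + j) (q w')"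
    using H_Xs hH unfolding Xs_def by blast
  have p1: "1 < p" using p2 by simp
  have "\<exists>i w'. i < p \<and> w' \<in> tree m \<and> desc u w' \<and> k (A i w') \<noteq> h (A i w')"
  proof (rule ccontr)
    assume "\<not> ?thesis"
    hence eq: "\<And>i w'. i < p \<Longrightarrow> w' \<in> tree m \<Longrightarrow> desc u w' \<Longrightarrow> k (A i w') = h (A i w')" by blast
    have A1u: "A 1 u \<noteq> u" using orb[of 1] p1 by (simp add: A_def)
    have k1: "k (A 1 w') = A 1 w'" if w': "w' \<in> tree m" "desc u w'" for w'
    proof -
      have "desc (A 1 u) (A 1 w')" "A 1 w' \<in> tree m" using A_desc[OF w'] by auto
      hence "\<not> desc u (A 1 w')" using desc_incomp[OF Au_len A1u] by blast
      thus ?thesis using rist_fix[OF k(2) \<open>A 1 w' \<in> tree m\<close>] by blast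
    qed
    have h1: "A (1 + j) (q w') = A 1 w'" if w': "w' \<in> tree m" "desc u w'" for w'
      using eq[OF p1 w'] jq(2)[OF p1 w'] k1[OF w'] by simp
    have "A (1 + j) u = A 1 u" using h1[OF ut desc_refl] rist_fix_root[OF jq(1) ut] by simp
    hence "A 1 (A j u) = A 1 u" using A_add[of 1 j] by simp
    hence "A j u = u" using aut_inj[OF A_aut] by (metis injD)
    hence Aj: "A j = id" using A_fix_u by blast
    have qid: "q w' = w'" if w': "w' \<in> tree m" "desc u w'" for w'
    proof -
      have "A 1 (q w') = A 1 w'" using h1[OF w'] A_add[of 1 j] Aj by simp
      thus ?thesis using aut_inj[OF A_aut] by (metis injD)
    qed
    have "k w' = w'" if w': "w' \<in> tree m" "desc u w'" for w'
      using eq[of 0 w'] jq(2)[of 0 w'] p1 w' A_0 Aj qid[OF w'] by simp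
    moreover obtain w where "w \<in> tree m" "desc u w" "k w \<noteq> w" using rist_moves[OF k(2,3)] by blast
    ultimately show False by blast
  qed
  then obtain i0 w0 where iw: "i0 < p" "w0 \<in> tree m" "desc u w0" "k (A i0 w0) \<noteq> h (A i0 w0)" by blast
  have hK: "h \<in> K" using hH HK by blast
  have ah: "is_aut m h" using hK K_aut by blast
  define n where "n = k \<circ> inv\<^bsub>AutT m\<^esub> h"
  have nK: "n \<in> K" unfolding n_def using K_comp K_inv hK k(1) by blast
  have rn: "r n = id"
  proof -
    have "r n = r k \<circ> r (inv\<^bsub>AutT m\<^esub> h)" unfolding n_def using r_mult K_inv hK k(1) by simp
    moreover have "r (inv\<^bsub>AutT m\<^esub> h) = inv\<^bsub>AutT m\<^esub> h" using rid H_inv hH by blast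
    ultimately have "r n = h \<circ> inv\<^bsub>AutT m\<^esub> h" using h_def by simp
    thus ?thesis using aut_inv_comp1[OF ah] by simp
  qed
  define i2 where "i2 = (i0 + j) mod p"
  define w2 where "w2 = q w0"
  have i2p: "i2 < p" using p2 by (simp add: i2_def)
  have w2: "w2 \<in> tree m" "desc u w2" using rist_desc[OF jq(1) iw(2,3)] w2_def by auto
  have hz: "h (A i0 w0) = A i2 w2" using jq(2)[OF iw(1-3)] A_mod i2_def w2_def by simp
  have "n (A i2 w2) = k (A i0 w0)" unfolding n_def using hz[symmetric] AutT_inv_l[OF ah] by simp
  hence nmov: "n (A i2 w2) \<noteq> A i2 w2" using iw(4) hz by simp
  define n' where "n' = A (p - i2) \<circ> n \<circ> A i2"
  have n'K: "n' \<in> K" unfolding n'_def using K_comp A_K nK by blast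
  have rn': "r n' = id"
  proof -
    have "r n' = r (A (p - i2)) \<circ> r n \<circ> r (A i2)" unfolding n'_def using r_mult K_comp A_K nK by simp
    also have "\<dots> = id" using rn rid A_H A_inv2[of i2] i2p by simp
    finally show ?thesis .
  qed
  have n'mov: "n' w2 \<noteq> w2"
  proof
    assume "n' w2 = w2"
    hence "A (p - i2) (n (A i2 w2)) = A (p - i2) (A i2 w2)" using A_inv2'[of i2 w2] i2p by (simp add: n'_def)
    hence "n (A i2 w2) = A i2 w2" using aut_inj[OF A_aut] by (metis injD)
    thus False using nmov by simp
  qed
  \<comment> \<open>the commutator trick\<close>
  obtain x where x: "x \<in> K" "x \<in> rist m G w2" "x \<noteq> id" using K_rist[OF fiK Kg w2(1)] by blast
  obtain w where w: "w \<in> tree m" "desc w2 w" "x w \<noteq> w" using rist_moves[OF x(2,3)] by blast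
  obtain y where y: "y \<in> K" "y \<in> rist m G w" "y \<noteq> id" using K_rist[OF fiK Kg w(1)] by blast
  obtain w3 where w3: "w3 \<in> tree m" "desc w w3" "y w3 \<noteq> w3" using rist_moves[OF y(2,3)] by blast
  have yv: "y \<in> rist m G w2" using rist_mono[OF w(2)] y(2) by blast
  have xu: "x \<in> rist m G u" using rist_mono[OF w2(2)] x(2) by blast
  have yu: "y \<in> rist m G u" using rist_mono[OF w2(2)] yv by blast
  have ax: "is_aut m x" and ay: "is_aut m y" and an': "is_aut m n'" using K_aut x y n'K by auto
  define ix where "ix = inv\<^bsub>AutT m\<^esub> x"
  define iy where "iy = inv\<^bsub>AutT m\<^esub> y"
  define z0 where "z0 = n' \<circ> x \<circ> inv\<^bsub>AutT m\<^esub> n'"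
  define iz where "iz = inv\<^bsub>AutT m\<^esub> z0"
  have ixv: "ix \<in> rist m G w2" using rist_inv[OF x(2)] ix_def by simp
  have z0r: "z0 \<in> rist m G (n' w2)" unfolding z0_def using rist_conj[OF _ x(2)] n'K KG by blast
  have len: "length w2 = length (n' w2)" using aut_len[OF an' w2(1)] by simp
  have ne: "w2 \<noteq> n' w2" using n'mov by simp
  have cx: "x \<circ> z0 = z0 \<circ> x" using rist_comm[OF x(2) z0r len ne] .
  have cy: "y \<circ> z0 = z0 \<circ> y" using rist_comm[OF yv z0r len ne] .
  have cix: "ix \<circ> z0 = z0 \<circ> ix" using rist_comm[OF ixv z0r len ne] .
  have z0K: "z0 \<in> K" unfolding z0_def using K_comp K_inv n'K x(1) by blast
  have az: "is_aut m z0" using K_aut z0K by blast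
  define d where "d = z0 \<circ> ix \<circ> y \<circ> x \<circ> iz \<circ> iy"
  define t where "t = ix \<circ> y \<circ> x \<circ> iy"
  have ixK: "ix \<in> K" and iyK: "iy \<in> K" and izK: "iz \<in> K" using K_inv x y z0K ix_def iy_def iz_def by auto
  have rz0: "r z0 = r x"
  proof -
    have "r z0 = r n' \<circ> r x \<circ> r (inv\<^bsub>AutT m\<^esub> n')" unfolding z0_def using r_mult K_comp K_inv n'K x(1) by simp
    thus ?thesis using rn' r_inv[OF n'K] monoid.inv_one[OF group.is_monoid[OF AutT_group]] by simp
  qed
  have rd: "r d = id"
  proof -
    have "r d = r z0 \<circ> r ix \<circ> r y \<circ> r x \<circ> r iz \<circ> r iy"
      unfolding d_def using r_mult K_comp ixK iyK izK x(1) y(1) z0K by simp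
    also have "\<dots> = r x \<circ> inv\<^bsub>AutT m\<^esub> (r x) \<circ> r y \<circ> r x \<circ> inv\<^bsub>AutT m\<^esub> (r x) \<circ> inv\<^bsub>AutT m\<^esub> (r y)"
      using rz0 r_inv x(1) y(1) z0K ix_def iy_def iz_def by simp
    also have "\<dots> = id" using aut_inv_comp1[OF r_aut[OF x(1)]] aut_inv_comp1[OF r_aut[OF y(1)]]
      by (simp add: o_assoc[symmetric])
    finally show ?thesis .
  qed
  have dt: "d = t"
  proof -
    have "d = ix \<circ> y \<circ> x \<circ> (z0 \<circ> iz) \<circ> iy"
      unfolding d_def by (simp add: o_assoc[symmetric] cx[symmetric] cy[symmetric] cix[symmetric])
    also have "z0 \<circ> iz = id" using aut_inv_comp1[OF az] iz_def by simp
    finally show ?thesis unfolding t_def by (simp add: comp_def)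
  qed
  have tK: "t \<in> K" unfolding t_def using K_comp ixK iyK x(1) y(1) by blast
  have rt: "r t = id" using rd dt by simp
  have tu: "t \<in> rist m G u" unfolding t_def ix_def iy_def using rist_comp rist_inv xu yu by blast
  have tne: "t \<noteq> id"
  proof
    assume t1: "t = id"
    have comm: "y (x z) = x (y z)" for z
    proof -
      have "t (y z) = y z" using t1 by simp
      hence "ix (y (x z)) = y z" unfolding t_def iy_def using AutT_inv_l[OF ay] by simp
      hence "x (ix (y (x z))) = x (y z)" by simp
      thus ?thesis using AutT_inv_r[OF ax] ix_def by simp
    qed
    have "(x \<circ> y \<circ> ix) w3 = y w3" using comm[of "ix w3"] AutT_inv_r[OF ax] ix_def by simp
    moreover have "x \<circ> y \<circ> ix \<in> rist m G (x w)" unfolding ix_def using rist_conj[OF _ y(2)] x(1) KG by blast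
    moreover have "\<not> desc (x w) w3"
      using desc_incomp[of "x w" w "w3"] aut_len[OF ax w(1)] w(3) w3(2) by metis
    ultimately have "y w3 = w3" using rist_fix[OF _ w3(1)] by metis
    thus False using w3(3) by simp
  qed
  have DH: "Del t \<in> Hs" using Del_H[OF tu] .
  have "r (Del t) = id" using r_Dn[OF tK rt] by (simp add: Del_def)
  hence Did: "Del t = id" using rid[OF DH] by simp
  obtain w4 where w4: "w4 \<in> tree m" "desc u w4" "t w4 \<noteq> w4" using rist_moves[OF tu tne] by blast
  have "Del t (A 0 w4) = A 0 (t w4)" using Del_eval[OF tu _ w4(1,2)] p2 by simp
  thus False using Did A_0 w4(3) by simp
qed

end

theorem lemma3p2:
  fixes m :: "nat \<Rightarrow> nat" and G :: "(nat list \<Rightarrow> nat list) set"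
  assumes "\<And>n. m n \<ge> 2"
    and "subgroup G (AutT m)"
    and "fin_gen m G"
    and "branch m G"
    and "\<exists>g\<in>G. g \<noteq> \<one>\<^bsub>AutT m\<^esub> \<and> (\<exists>k::nat. k > 0 \<and> g [^]\<^bsub>AutT m\<^esub> k = \<one>\<^bsub>AutT m\<^esub>)"
  shows "\<not> LR m G"
proof
  assume LR: "LR m G"
  interpret B: BBF m G
    using assms(1-4) by (simp add: BBF_def BB_def BT_def BBF_axioms_def BB_axioms_def)
  obtain g k where gk: "g \<in> G" "g \<noteq> id" "(k::nat) > 0" "g [^]\<^bsub>AutT m\<^esub> k = id"
    using assms(5) by auto
  obtain a and p :: nat and u where apu: "a \<in> G" "2 \<le> p" "a [^]\<^bsub>AutT m\<^esub> p = id" "u \<in> tree m"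
    "\<forall>i. 0 < i \<and> i < p \<longrightarrow> (a [^]\<^bsub>AutT m\<^esub> i) u \<noteq> u"
    using B.torsion_elt[OF gk] by blast
  interpret M: MM m G a p u
    using apu B.BBF_axioms by (simp add: MM_def MM_axioms_def)
  have "virtual_retract m G M.Hs" using LR M.H_grp M.H_fg unfolding LR_def by blast
  then obtain K r where Kr: "subgroup K (grp m G)" "M.Hs \<subseteq> K" "finite_index m G K"
    "r \<in> hom (grp m K) (grp m M.Hs)" "\<forall>h\<in>M.Hs. r h = h"
    unfolding virtual_retract_def by blast
  interpret R: RR m G a p u K r
    using Kr M.MM_axioms by (simp add: RR_def RR_axioms_def)
  show False by (rule R.contradiction)
qed

end
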